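(* Let $\mathcal D$ be a preduoidal category and $T$ a separately opmonoidal monad on $\mathcal D$ equipped with an R-matrix $(R,\nu,\varpi,\iota)$. Then $\mathcal D^T$, with its lifted monoidal structures $(\circ,(\bot,T^\circ_0))$ and $(\bullet,(1,T^\bullet_0))$, is a duoidal category with structure morphisms $\nu,\varpi,\iota$ and interchange law $$\xi_{a,b,c,d} := ((\alpha\circ\gamma)\bullet(\beta\circ\delta))\cdot R_{a,b,c,d}\colon (a\bullet b)\circ(c\bullet d)\to(a\circ c)\bullet(b\circ d)$$ for all $T$-algebras $(a,\alpha),(b,\beta),(c,\gamma),(d,\delta)$. In particular each $\xi_{a,b,c,d}$ is a morphism of $T$-algebras.
   Context: Composition of morphisms is written $g\cdot f$ ($f$ first). A preduoidal category is a category $\mathcal D$ with two monoidal structures $(\circ,\bot)$ and $(\bullet,1)$ (associators $\alpha$, unitors $\lambda^\circ,\rho^\circ,\lambda^\bullet,\rho^\bullet$). A bimonad on a monoidal category $(\mathcal C,\otimes,I)$ is a monad $(B,\mu,\eta)$ with an opmonoidal structure $B_2\colon B(x\otimes y)\to Bx\otimes By$, $B_0\colon BI\to I$ such that $\mu,\eta$ are opmonoidal. A separately opmonoidal monad on $\mathcal D$ is a monad $(T,\mu,\eta)$ with a bimonad structure $(T^\circ_2,T^\circ_0)$ on $(\mathcal D,\circ,\bot)$ and one $(T^\bullet_2,T^\bullet_0)$ on $(\mathcal D,\bullet,1)$. Lifted monoidal structures on $\mathcal D^T$: $(a,\alpha)\circ(b,\beta)=(a\circ b,(\alpha\circ\beta)\cdot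 T^\circ_{2,a,b})$, unit $(\bot,T^\circ_0)$; $(a,\alpha)\bullet(b,\beta)=(a\bullet b,(\alpha\bullet\beta)\cdot T^\bullet_{2,a,b})$, unit $(1,T^\bullet_0)$. Duoidal category: a preduoidal category with a natural transformation $\zeta_{x,y,a,b}\colon (x\bullet y)\circ(a\bullet b)\to(x\circ a)\bullet(y\circ b)$ and morphisms $\nu\colon\bot\to\bot\bullet\bot$, $\varpi\colon 1\circ 1\to 1$, $\iota\colon\bot\to 1$ such that $(1,\varpi,\iota)$ is a monoid in $(\mathcal D,\circ,\bot)$, $(\bot,\nu,\iota)$ is a comonoid in $(\mathcal D,\bullet,1)$, and: (A1) $(\alpha\bullet\alpha)\cdot\zeta_{x\circ a,y\circ b,c,d}\cdot(\zeta_{x,y,a,b}\circ\mathrm{id}) = \zeta_{x,y,a\circ c,b\circ d}\cdot(\mathrm{id}\circ\zeta_{a,b,c,d})\cdot\alpha$; (A2) $\alpha\cdot(\zeta_{x,a,y,b}\bullet\mathrm{id})\cdot\zeta_{x\bullet a,c,y\bullet b,d} = (\mathrm{id}\bullet\zeta_{a,c,b,d})\cdot\zeta_{x,a\bullet c,y,b\bullet d}\cdot(\alpha\circ\alpha)$; (U) $\zeta_{\bot,\bot,a,b}\cdot(\nu\circ\mathrm{id})=((\lambda^\circ_a)^{-1}\bullet(\lambda^\circ_b)^{-1})\cdot\lambda^\circ_{a\bullet b}$, $\zeta_{a,b,\bot,\bot}\cdot(\mathrm{id}\circ\nu)=((\rho^\circ_a)^{-1}\bullet(\rho^\circ_b)^{-1})\cdot\rho^\circ_{a\bullet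 b}$, $(\varpi\bullet\mathrm{id})\cdot\zeta_{1,a,1,b}=(\lambda^\bullet_{a\circ b})^{-1}\cdot(\lambda^\bullet_a\circ\lambda^\bullet_b)$, $(\mathrm{id}\bullet\varpi)\cdot\zeta_{a,1,b,1}=(\rho^\bullet_{a\circ b})^{-1}\cdot(\rho^\bullet_a\circ\rho^\bullet_b)$. For $\mathcal D^T$ all data are required to be morphisms of $T$-algebras. R-matrix on $T$: a natural transformation $R_{a,b,c,d}\colon (a\bullet b)\circ(c\bullet d)\to(Ta\circ Tc)\bullet(Tb\circ Td)$ together with morphisms of $T$-algebras $\nu\colon(\bot,T^\circ_0)\to(\bot,T^\circ_0)\bullet(\bot,T^\circ_0)$, $\varpi\colon(1,T^\bullet_0)\circ(1,T^\bullet_0)\to(1,T^\bullet_0)$, $\iota\colon(\bot,T^\circ_0)\to(1,T^\bullet_0)$, such that $(1,\varpi,\iota)$ is a monoid in $(\mathcal D^T,\circ,\bot)$, $(\bot,\nu,\iota)$ is a comonoid in $(\mathcal D^T,\bullet,1)$, and (associators suppressed): (R-unit) for all $T$-algebras $(a,\alpha),(b,\beta)$: $((T^\circ_0\circ\alpha)\bullet(T^\circ_0\circ\beta))\cdot R_{\bot,\bot,a,b}\cdot(\nu\circ\mathrm{id})=((\lambda^\circ_a)^{-1}\bullet(\lambda^\circ_b)^{-1})\cdot\lambda^\circ_{a\bullet b}$; $((\alpha\circ T^\circ_0)\bullet(\beta\circ T^\circ_0))\cdot R_{a,b,\bot,\bot}\cdot(\mathrm{id}\circ\nu)=((\rho^\circ_a)^{-1}\bullet(\rho^\circ_b)^{-1})\cdot\rho^\circ_{a\bullet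 b}$; $(\varpi\bullet\mathrm{id})\cdot((T^\bullet_0\circ T^\bullet_0)\bullet(\alpha\circ\beta))\cdot R_{1,a,1,b}=(\lambda^\bullet_{a\circ b})^{-1}\cdot(\lambda^\bullet_a\circ\lambda^\bullet_b)$; $(\mathrm{id}\bullet\varpi)\cdot((\alpha\circ\beta)\bullet(T^\bullet_0\circ T^\bullet_0))\cdot R_{a,1,b,1}=(\rho^\bullet_{a\circ b})^{-1}\cdot(\rho^\bullet_a\circ\rho^\bullet_b)$. (R-lift) for all objects: $((\mu_a\circ\mu_c)\bullet(\mu_b\circ\mu_d))\cdot R_{Ta,Tb,Tc,Td}\cdot(T^\bullet_{2,a,b}\circ T^\bullet_{2,c,d})\cdot T^\circ_{2,a\bullet b,c\bullet d} = ((\mu_a\circ\mu_c)\bullet(\mu_b\circ\mu_d))\cdot(T^\circ_{2,Ta,Tc}\bullet T^\circ_{2,Tb,Td})\cdot T^\bullet_{2,Ta\circ Tc,Tb\circ Td}\cdot TR_{a,b,c,d}$. (R-1) for all objects: $((\mu_a\circ\mu_c\circ Tx)\bullet(\mu_b\circ\mu_d\circ Ty))\cdot((T^\circ_{2,Ta,Tc}\circ Tx)\bullet(T^\circ_{2,Tb,Td}\circ Ty))\cdot R_{Ta\circ Tc,Tb\circ Td,x,y}\cdot(R_{a,b,c,d}\circ\mathrm{id}) = ((Ta\circ\mu_c\circ\mu_x)\bullet(Tb\circ\mu_d\circ\mu_y))\cdot((Ta\circ T^\circ_{2,Tc,Tx})\bullet(Tb\circ T^\circ_{2,Td,Ty}))\cdot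 R_{a,b,Tc\circ Tx,Td\circ Ty}\cdot(\mathrm{id}\circ R_{c,d,x,y})$. (R-2) for all objects: $(((\mu_x\circ\mu_y)\bullet(\mu_a\circ\mu_b))\bullet\mathrm{id})\cdot(R_{Tx,Ta,Ty,Tb}\bullet\mathrm{id})\cdot((T^\bullet_{2,x,a}\circ T^\bullet_{2,y,b})\bullet\mathrm{id})\cdot R_{x\bullet a,c,y\bullet b,d} = (\mathrm{id}\bullet((\mu_a\circ\mu_b)\bullet(\mu_c\circ\mu_d)))\cdot(\mathrm{id}\bullet R_{Ta,Tc,Tb,Td})\cdot(\mathrm{id}\bullet(T^\bullet_{2,a,c}\circ T^\bullet_{2,b,d}))\cdot R_{x,a\bullet c,y,b\bullet d}\cdot(\alpha\circ\alpha)$. *)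

theory Defs
  imports Main
begin

text \<open>Elementary category theory, developed from scratch (no library for it).
  Composition: Cmp C g f is "g after f" (written g . f in the paper).\<close>

record ('o,'m) cat =
  Obj :: "'o set"
  Arr :: "'m set"
  Dom :: "'m \<Rightarrow> 'o"
  Cod :: "'m \<Rightarrow> 'o"
  Idt :: "'o \<Rightarrow> 'm"
  Cmp :: "'m \<Rightarrow> 'm \<Rightarrow> 'm"

definition hom :: "('o,'m) cat \<Rightarrow> 'o \<Rightarrow> 'o \<Rightarrow> 'm set" where
  "hom C x y = {f \<in> Arr C. Dom C f = x \<and> Cod C f = y}"

definition category :: "('o,'m) cat \<Rightarrow> bool" where
  "category C \<longleftrightarrow>
    (\<forall>f\<in>Arr C. Dom C f \<in> Obj C \<and> Cod C f \<in> Obj C) \<and>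
    (\<forall>x\<in>Obj C. Idt C x \<in> hom C x x) \<and>
    (\<forall>f\<in>Arr C. \<forall>g\<in>Arr C. Cod C f = Dom C g \<longrightarrow> Cmp C g f \<in> hom C (Dom C f) (Cod C g)) \<and>
    (\<forall>f\<in>Arr C. Cmp C f (Idt C (Dom C f)) = f \<and> Cmp C (Idt C (Cod C f)) f = f) \<and>
    (\<forall>f\<in>Arr C. \<forall>g\<in>Arr C. \<forall>h\<in>Arr C. Cod C f = Dom C g \<longrightarrow> Cod C g = Dom C h \<longrightarrow>
        Cmp C h (Cmp C g f) = Cmp C (Cmp C h g) f)"

definition inverse_arr :: "('o,'m) cat \<Rightarrow> 'm \<Rightarrow> 'm \<Rightarrow> bool" where
  "inverse_arr C f g \<longleftrightarrow> f \<in> Arr C \<and> g \<in> hom C (Cod C f) (Dom C f) \<and>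
     Cmp C g f = Idt C (Dom C f) \<and> Cmp C f g = Idt C (Cod C f)"

definition iso :: "('o,'m) cat \<Rightarrow> 'm \<Rightarrow> bool" where
  "iso C f \<longleftrightarrow> (\<exists>g. inverse_arr C f g)"

definition cinv :: "('o,'m) cat \<Rightarrow> 'm \<Rightarrow> 'm" where
  "cinv C f = (SOME g. inverse_arr C f g)"

definition "functor" :: "('o,'m) cat \<Rightarrow> ('o \<Rightarrow> 'o) \<Rightarrow> ('m \<Rightarrow> 'm) \<Rightarrow> bool" where
  "functor C F Fm \<longleftrightarrow>
    (\<forall>x\<in>Obj C. F x \<in> Obj C) \<and>
    (\<forall>f\<in>Arr C. Fm f \<in> hom C (F (Dom C f)) (F (Cod C f))) \<and>
    (\<forall>x\<in>Obj C. Fm (Idt C x) = Idt C (F x)) \<and>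
    (\<forall>f\<in>Arr C. \<forall>g\<in>Arr C. Cod C f = Dom C g \<longrightarrow> Fm (Cmp C g f) = Cmp C (Fm g) (Fm f))"

definition bifunctor :: "('o,'m) cat \<Rightarrow> ('o \<Rightarrow> 'o \<Rightarrow> 'o) \<Rightarrow> ('m \<Rightarrow> 'm \<Rightarrow> 'm) \<Rightarrow> bool" where
  "bifunctor C F Fm \<longleftrightarrow>
    (\<forall>x\<in>Obj C. \<forall>y\<in>Obj C. F x y \<in> Obj C) \<and>
    (\<forall>f\<in>Arr C. \<forall>g\<in>Arr C. Fm f g \<in> hom C (F (Dom C f) (Dom C g)) (F (Cod C f) (Cod C g))) \<and>
    (\<forall>x\<in>Obj C. \<forall>y\<in>Obj C. Fm (Idt C x) (Idt C y) = Idt C (F x y)) \<and>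
    (\<forall>f\<in>Arr C. \<forall>f'\<in>Arr C. \<forall>g\<in>Arr C. \<forall>g'\<in>Arr C.
        Cod C f = Dom C f' \<longrightarrow> Cod C g = Dom C g' \<longrightarrow>
        Fm (Cmp C f' f) (Cmp C g' g) = Cmp C (Fm f' g') (Fm f g))"

record ('o,'m) mon =
  Ten :: "'o \<Rightarrow> 'o \<Rightarrow> 'o"
  TenM :: "'m \<Rightarrow> 'm \<Rightarrow> 'm"
  MUnit :: 'o
  Asc :: "'o \<Rightarrow> 'o \<Rightarrow> 'o \<Rightarrow> 'm"
  Lu :: "'o \<Rightarrow> 'm"
  Ru :: "'o \<Rightarrow> 'm"

definition monoidal :: "('o,'m) cat \<Rightarrow> ('o,'m) mon \<Rightarrow> bool" where
  "monoidal C M \<longleftrightarrow> category C \<and> bifunctor C (Ten M) (TenM M) \<and> MUnit M \<in> Obj C \<and>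
    (\<forall>x\<in>Obj C. \<forall>y\<in>Obj C. \<forall>z\<in>Obj C.
       Asc M x y z \<in> hom C (Ten M (Ten M x y) z) (Ten M x (Ten M y z)) \<and> iso C (Asc M x y z)) \<and>
    (\<forall>x\<in>Obj C. Lu M x \<in> hom C (Ten M (MUnit M) x) x \<and> iso C (Lu M x)) \<and>
    (\<forall>x\<in>Obj C. Ru M x \<in> hom C (Ten M x (MUnit M)) x \<and> iso C (Ru M x)) \<and>
    (\<forall>f\<in>Arr C. \<forall>g\<in>Arr C. \<forall>h\<in>Arr C.
       Cmp C (Asc M (Cod C f) (Cod C g) (Cod C h)) (TenM M (TenM M f g) h)
       = Cmp C (TenM M f (TenM M g h)) (Asc M (Dom C f) (Dom C g) (Dom C h))) \<and>
    (\<forall>f\<in>Arr C. Cmp C (Lu M (Cod C f)) (TenM M (Idt C (MUnit M)) f) = Cmp C f (Lu M (Dom C f))) \<and>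
    (\<forall>f\<in>Arr C. Cmp C (Ru M (Cod C f)) (TenM M f (Idt C (MUnit M))) = Cmp C f (Ru M (Dom C f))) \<and>
    (\<forall>w\<in>Obj C. \<forall>x\<in>Obj C. \<forall>y\<in>Obj C. \<forall>z\<in>Obj C.
       Cmp C (Asc M w x (Ten M y z)) (Asc M (Ten M w x) y z)
       = Cmp C (TenM M (Idt C w) (Asc M x y z))
           (Cmp C (Asc M w (Ten M x y) z) (TenM M (Asc M w x y) (Idt C z)))) \<and>
    (\<forall>x\<in>Obj C. \<forall>y\<in>Obj C.
       Cmp C (TenM M (Idt C x) (Lu M y)) (Asc M x (MUnit M) y) = TenM M (Ru M x) (Idt C y))"

text \<open>A preduoidal category: one category with two monoidal structures
  (M1 = (circ, bot), M2 = (bullet, 1)).\<close>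
definition preduoidal :: "('o,'m) cat \<Rightarrow> ('o,'m) mon \<Rightarrow> ('o,'m) mon \<Rightarrow> bool" where
  "preduoidal C M1 M2 \<longleftrightarrow> monoidal C M1 \<and> monoidal C M2"

definition monoid_obj :: "('o,'m) cat \<Rightarrow> ('o,'m) mon \<Rightarrow> 'o \<Rightarrow> 'm \<Rightarrow> 'm \<Rightarrow> bool" where
  "monoid_obj C M m mu e \<longleftrightarrow> m \<in> Obj C \<and> mu \<in> hom C (Ten M m m) m \<and> e \<in> hom C (MUnit M) m \<and>
    Cmp C mu (TenM M mu (Idt C m)) = Cmp C mu (Cmp C (TenM M (Idt C m) mu) (Asc M m m m)) \<and>
    Cmp C mu (TenM M e (Idt C m)) = Lu M m \<and>
    Cmp C mu (TenM M (Idt C m) e) = Ru M m"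

definition comonoid_obj :: "('o,'m) cat \<Rightarrow> ('o,'m) mon \<Rightarrow> 'o \<Rightarrow> 'm \<Rightarrow> 'm \<Rightarrow> bool" where
  "comonoid_obj C M c delta e \<longleftrightarrow> c \<in> Obj C \<and> delta \<in> hom C c (Ten M c c) \<and> e \<in> hom C c (MUnit M) \<and>
    Cmp C (Asc M c c c) (Cmp C (TenM M delta (Idt C c)) delta) = Cmp C (TenM M (Idt C c) delta) delta \<and>
    Cmp C (TenM M e (Idt C c)) delta = cinv C (Lu M c) \<and>
    Cmp C (TenM M (Idt C c) e) delta = cinv C (Ru M c)"

definition duoidal :: "('o,'m) cat \<Rightarrow> ('o,'m) mon \<Rightarrow> ('o,'m) mon \<Rightarrow>
    ('o \<Rightarrow> 'o \<Rightarrow> 'o \<Rightarrow> 'o \<Rightarrow> 'm) \<Rightarrow> 'm \<Rightarrow> 'm \<Rightarrow> 'm \<Rightarrow> bool" where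
  "duoidal C M1 M2 z nu varpi iota \<longleftrightarrow>
   (let cp = Cmp C; i = Idt C; Ot = Ten M1; OM = TenM M1; Bt = Ten M2; BM = TenM M2;
        Bot = MUnit M1; One = MUnit M2 in
    preduoidal C M1 M2 \<and>
    (\<forall>x\<in>Obj C. \<forall>y\<in>Obj C. \<forall>a\<in>Obj C. \<forall>b\<in>Obj C.
       z x y a b \<in> hom C (Ot (Bt x y) (Bt a b)) (Bt (Ot x a) (Ot y b))) \<and>
    (\<forall>f\<in>Arr C. \<forall>g\<in>Arr C. \<forall>h\<in>Arr C. \<forall>k\<in>Arr C.
       cp (z (Cod C f) (Cod C g) (Cod C h) (Cod C k)) (OM (BM f g) (BM h k))
       = cp (BM (OM f h) (OM g k)) (z (Dom C f) (Dom C g) (Dom C h) (Dom C k))) \<and>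
    monoid_obj C M1 One varpi iota \<and>
    comonoid_obj C M2 Bot nu iota \<and>
    (\<forall>x\<in>Obj C. \<forall>y\<in>Obj C. \<forall>a\<in>Obj C. \<forall>b\<in>Obj C. \<forall>c\<in>Obj C. \<forall>d\<in>Obj C.
       cp (BM (Asc M1 x a c) (Asc M1 y b d)) (cp (z (Ot x a) (Ot y b) c d) (OM (z x y a b) (i (Bt c d))))
       = cp (z x y (Ot a c) (Ot b d)) (cp (OM (i (Bt x y)) (z a b c d)) (Asc M1 (Bt x y) (Bt a b) (Bt c d)))) \<and>
    (\<forall>x\<in>Obj C. \<forall>y\<in>Obj C. \<forall>a\<in>Obj C. \<forall>b\<in>Obj C. \<forall>c\<in>Obj C. \<forall>d\<in>Obj C.
       cp (Asc M2 (Ot x y) (Ot a b) (Ot c d)) (cp (BM (z x a y b) (i (Ot c d))) (z (Bt x a) c (Bt y b) d))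
       = cp (BM (i (Ot x y)) (z a c b d)) (cp (z x (Bt a c) y (Bt b d)) (OM (Asc M2 x a c) (Asc M2 y b d)))) \<and>
    (\<forall>a\<in>Obj C. \<forall>b\<in>Obj C.
       cp (z Bot Bot a b) (OM nu (i (Bt a b)))
         = cp (BM (cinv C (Lu M1 a)) (cinv C (Lu M1 b))) (Lu M1 (Bt a b)) \<and>
       cp (z a b Bot Bot) (OM (i (Bt a b)) nu)
         = cp (BM (cinv C (Ru M1 a)) (cinv C (Ru M1 b))) (Ru M1 (Bt a b)) \<and>
       cp (BM varpi (i (Ot a b))) (z One a One b)
         = cp (cinv C (Lu M2 (Ot a b))) (OM (Lu M2 a) (Lu M2 b)) \<and>
       cp (BM (i (Ot a b)) varpi) (z a One b One)
         = cp (cinv C (Ru M2 (Ot a b))) (OM (Ru M2 a) (Ru M2 b))))"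

record ('o,'m) monad =
  TO :: "'o \<Rightarrow> 'o"
  TM :: "'m \<Rightarrow> 'm"
  Mu :: "'o \<Rightarrow> 'm"
  Eta :: "'o \<Rightarrow> 'm"

definition monad :: "('o,'m) cat \<Rightarrow> ('o,'m) monad \<Rightarrow> bool" where
  "monad C T \<longleftrightarrow> category C \<and> functor C (TO T) (TM T) \<and>
    (\<forall>x\<in>Obj C. Mu T x \<in> hom C (TO T (TO T x)) (TO T x) \<and> Eta T x \<in> hom C x (TO T x)) \<and>
    (\<forall>f\<in>Arr C. Cmp C (Mu T (Cod C f)) (TM T (TM T f)) = Cmp C (TM T f) (Mu T (Dom C f))) \<and>
    (\<forall>f\<in>Arr C. Cmp C (Eta T (Cod C f)) f = Cmp C (TM T f) (Eta T (Dom C f))) \<and>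
    (\<forall>x\<in>Obj C. Cmp C (Mu T x) (TM T (Mu T x)) = Cmp C (Mu T x) (Mu T (TO T x))) \<and>
    (\<forall>x\<in>Obj C. Cmp C (Mu T x) (Eta T (TO T x)) = Idt C (TO T x)) \<and>
    (\<forall>x\<in>Obj C. Cmp C (Mu T x) (TM T (Eta T x)) = Idt C (TO T x))"

definition bimonad :: "('o,'m) cat \<Rightarrow> ('o,'m) mon \<Rightarrow> ('o,'m) monad \<Rightarrow>
    ('o \<Rightarrow> 'o \<Rightarrow> 'm) \<Rightarrow> 'm \<Rightarrow> bool" where
  "bimonad C M T T2 T0 \<longleftrightarrow>
   (let cp = Cmp C; i = Idt C; Ot = Ten M; OM = TenM M; I = MUnit M;
        t = TO T; tm = TM T in
    monoidal C M \<and> monad C T \<and>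
    (\<forall>x\<in>Obj C. \<forall>y\<in>Obj C. T2 x y \<in> hom C (t (Ot x y)) (Ot (t x) (t y))) \<and>
    T0 \<in> hom C (t I) I \<and>
    (\<forall>f\<in>Arr C. \<forall>g\<in>Arr C.
       cp (T2 (Cod C f) (Cod C g)) (tm (OM f g)) = cp (OM (tm f) (tm g)) (T2 (Dom C f) (Dom C g))) \<and>
    (\<forall>x\<in>Obj C. \<forall>y\<in>Obj C. \<forall>z\<in>Obj C.
       cp (Asc M (t x) (t y) (t z)) (cp (OM (T2 x y) (i (t z))) (T2 (Ot x y) z))
       = cp (OM (i (t x)) (T2 y z)) (cp (T2 x (Ot y z)) (tm (Asc M x y z)))) \<and>
    (\<forall>x\<in>Obj C. cp (Lu M (t x)) (cp (OM T0 (i (t x))) (T2 I x)) = tm (Lu M x)) \<and>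
    (\<forall>x\<in>Obj C. cp (Ru M (t x)) (cp (OM (i (t x)) T0) (T2 x I)) = tm (Ru M x)) \<and>
    (\<forall>x\<in>Obj C. \<forall>y\<in>Obj C.
       cp (T2 x y) (Mu T (Ot x y)) = cp (OM (Mu T x) (Mu T y)) (cp (T2 (t x) (t y)) (tm (T2 x y)))) \<and>
    cp T0 (Mu T I) = cp T0 (tm T0) \<and>
    (\<forall>x\<in>Obj C. \<forall>y\<in>Obj C. cp (T2 x y) (Eta T (Ot x y)) = OM (Eta T x) (Eta T y)) \<and>
    cp T0 (Eta T I) = i I)"

definition sep_opmonoidal_monad :: "('o,'m) cat \<Rightarrow> ('o,'m) mon \<Rightarrow> ('o,'m) mon \<Rightarrow> ('o,'m) monad \<Rightarrow>
    ('o \<Rightarrow> 'o \<Rightarrow> 'm) \<Rightarrow> 'm \<Rightarrow> ('o \<Rightarrow> 'o \<Rightarrow> 'm) \<Rightarrow> 'm \<Rightarrow> bool" where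
  "sep_opmonoidal_monad C M1 M2 T T2c T0c T2b T0b \<longleftrightarrow>
     preduoidal C M1 M2 \<and> monad C T \<and> bimonad C M1 T T2c T0c \<and> bimonad C M2 T T2b T0b"

text \<open>Eilenberg--Moore category D^T. Objects: T-algebras (a, alpha).
  Arrows: triples (A, Bt, f) with f : A -> Bt a morphism of T-algebras.\<close>
definition algebra :: "('o,'m) cat \<Rightarrow> ('o,'m) monad \<Rightarrow> 'o \<times> 'm \<Rightarrow> bool" where
  "algebra C T A \<longleftrightarrow> fst A \<in> Obj C \<and> snd A \<in> hom C (TO T (fst A)) (fst A) \<and>
     Cmp C (snd A) (Eta T (fst A)) = Idt C (fst A) \<and>
     Cmp C (snd A) (TM T (snd A)) = Cmp C (snd A) (Mu T (fst A))"

definition alg_hom :: "('o,'m) cat \<Rightarrow> ('o,'m) monad \<Rightarrow> 'o \<times> 'm \<Rightarrow> 'o \<times> 'm \<Rightarrow> 'm \<Rightarrow> bool" where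
  "alg_hom C T A Bt f \<longleftrightarrow> algebra C T A \<and> algebra C T Bt \<and> f \<in> hom C (fst A) (fst Bt) \<and>
     Cmp C f (snd A) = Cmp C (snd Bt) (TM T f)"

type_synonym ('o,'m) em_arr = "('o \<times> 'm) \<times> ('o \<times> 'm) \<times> 'm"

definition EM :: "('o,'m) cat \<Rightarrow> ('o,'m) monad \<Rightarrow> ('o \<times> 'm, ('o,'m) em_arr) cat" where
  "EM C T = \<lparr> Obj = {A. algebra C T A},
              Arr = {p. alg_hom C T (fst p) (fst (snd p)) (snd (snd p))},
              Dom = (\<lambda>p. fst p),
              Cod = (\<lambda>p. fst (snd p)),
              Idt = (\<lambda>A. (A, A, Idt C (fst A))),
              Cmp = (\<lambda>q p. (fst p, fst (snd q), Cmp C (snd (snd q)) (snd (snd p)))) \<rparr>"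

definition lift_ten :: "('o,'m) cat \<Rightarrow> ('o,'m) mon \<Rightarrow> ('o \<Rightarrow> 'o \<Rightarrow> 'm) \<Rightarrow>
    'o \<times> 'm \<Rightarrow> 'o \<times> 'm \<Rightarrow> 'o \<times> 'm" where
  "lift_ten C M T2 A Bt = (Ten M (fst A) (fst Bt), Cmp C (TenM M (snd A) (snd Bt)) (T2 (fst A) (fst Bt)))"

definition lift_mon :: "('o,'m) cat \<Rightarrow> ('o,'m) mon \<Rightarrow> ('o \<Rightarrow> 'o \<Rightarrow> 'm) \<Rightarrow> 'm \<Rightarrow>
    ('o \<times> 'm, ('o,'m) em_arr) mon" where
  "lift_mon C M T2 T0 =
    (let t = lift_ten C M T2; U = (MUnit M, T0) in
     \<lparr> Ten = t,
       TenM = (\<lambda>p q. (t (fst p) (fst q), t (fst (snd p)) (fst (snd q)), TenM M (snd (snd p)) (snd (snd q)))),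
       MUnit = U,
       Asc = (\<lambda>A Bt D. (t (t A Bt) D, t A (t Bt D), Asc M (fst A) (fst Bt) (fst D))),
       Lu = (\<lambda>A. (t U A, A, Lu M (fst A))),
       Ru = (\<lambda>A. (t A U, A, Ru M (fst A))) \<rparr>)"

text \<open>R-matrix on T (associators inserted where the paper suppresses them).
  M1 = (circ, bot) with opmonoidal structure (T2c, T0c); M2 = (bullet, 1) with (T2b, T0b).\<close>
definition rmatrix :: "('o,'m) cat \<Rightarrow> ('o,'m) mon \<Rightarrow> ('o,'m) mon \<Rightarrow> ('o,'m) monad \<Rightarrow>
    ('o \<Rightarrow> 'o \<Rightarrow> 'm) \<Rightarrow> 'm \<Rightarrow> ('o \<Rightarrow> 'o \<Rightarrow> 'm) \<Rightarrow> 'm \<Rightarrow>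
    ('o \<Rightarrow> 'o \<Rightarrow> 'o \<Rightarrow> 'o \<Rightarrow> 'm) \<Rightarrow> 'm \<Rightarrow> 'm \<Rightarrow> 'm \<Rightarrow> bool" where
  "rmatrix C M1 M2 T T2c T0c T2b T0b R nu varpi iota \<longleftrightarrow>
   (let cp = Cmp C; i = Idt C; Ot = Ten M1; OM = TenM M1; Bt = Ten M2; BM = TenM M2;
        bot = MUnit M1; one = MUnit M2; t = TO T; tm = TM T; mu = Mu T;
        E = EM C T; L1 = lift_mon C M1 T2c T0c; L2 = lift_mon C M2 T2b T0b;
        Bot = MUnit L1; One = MUnit L2 in
    (\<forall>a\<in>Obj C. \<forall>b\<in>Obj C. \<forall>c\<in>Obj C. \<forall>d\<in>Obj C.
       R a b c d \<in> hom C (Ot (Bt a b) (Bt c d)) (Bt (Ot (t a) (t c)) (Ot (t b) (t d)))) \<and>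
    (\<forall>f\<in>Arr C. \<forall>g\<in>Arr C. \<forall>h\<in>Arr C. \<forall>k\<in>Arr C.
       cp (R (Cod C f) (Cod C g) (Cod C h) (Cod C k)) (OM (BM f g) (BM h k))
       = cp (BM (OM (tm f) (tm h)) (OM (tm g) (tm k))) (R (Dom C f) (Dom C g) (Dom C h) (Dom C k))) \<and>
    comonoid_obj E L2 Bot (Bot, Ten L2 Bot Bot, nu) (Bot, One, iota) \<and>
    monoid_obj E L1 One (Ten L1 One One, One, varpi) (Bot, One, iota) \<and>
    (\<forall>A\<in>Obj E. \<forall>A'\<in>Obj E.
       let a = fst A; b = fst A'; al = snd A; be = snd A' in
       cp (BM (OM T0c al) (OM T0c be)) (cp (R bot bot a b) (OM nu (i (Bt a b))))
         = cp (BM (cinv C (Lu M1 a)) (cinv C (Lu M1 b))) (Lu M1 (Bt a b)) \<and>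
       cp (BM (OM al T0c) (OM be T0c)) (cp (R a b bot bot) (OM (i (Bt a b)) nu))
         = cp (BM (cinv C (Ru M1 a)) (cinv C (Ru M1 b))) (Ru M1 (Bt a b)) \<and>
       cp (BM varpi (i (Ot a b))) (cp (BM (OM T0b T0b) (OM al be)) (R one a one b))
         = cp (cinv C (Lu M2 (Ot a b))) (OM (Lu M2 a) (Lu M2 b)) \<and>
       cp (BM (i (Ot a b)) varpi) (cp (BM (OM al be) (OM T0b T0b)) (R a one b one))
         = cp (cinv C (Ru M2 (Ot a b))) (OM (Ru M2 a) (Ru M2 b))) \<and>
    (\<forall>a\<in>Obj C. \<forall>b\<in>Obj C. \<forall>c\<in>Obj C. \<forall>d\<in>Obj C.
       cp (BM (OM (mu a) (mu c)) (OM (mu b) (mu d)))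
          (cp (R (t a) (t b) (t c) (t d)) (cp (OM (T2b a b) (T2b c d)) (T2c (Bt a b) (Bt c d))))
       = cp (BM (OM (mu a) (mu c)) (OM (mu b) (mu d)))
          (cp (BM (T2c (t a) (t c)) (T2c (t b) (t d)))
             (cp (T2b (Ot (t a) (t c)) (Ot (t b) (t d))) (tm (R a b c d))))) \<and>
    (\<forall>a\<in>Obj C. \<forall>b\<in>Obj C. \<forall>c\<in>Obj C. \<forall>d\<in>Obj C. \<forall>x\<in>Obj C. \<forall>y\<in>Obj C.
       cp (BM (Asc M1 (t a) (t c) (t x)) (Asc M1 (t b) (t d) (t y)))
        (cp (BM (OM (OM (mu a) (mu c)) (i (t x))) (OM (OM (mu b) (mu d)) (i (t y))))
         (cp (BM (OM (T2c (t a) (t c)) (i (t x))) (OM (T2c (t b) (t d)) (i (t y))))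
          (cp (R (Ot (t a) (t c)) (Ot (t b) (t d)) x y) (OM (R a b c d) (i (Bt x y))))))
       = cp (BM (OM (i (t a)) (OM (mu c) (mu x))) (OM (i (t b)) (OM (mu d) (mu y))))
          (cp (BM (OM (i (t a)) (T2c (t c) (t x))) (OM (i (t b)) (T2c (t d) (t y))))
           (cp (R a b (Ot (t c) (t x)) (Ot (t d) (t y)))
            (cp (OM (i (Bt a b)) (R c d x y)) (Asc M1 (Bt a b) (Bt c d) (Bt x y)))))) \<and>
    (\<forall>x\<in>Obj C. \<forall>a\<in>Obj C. \<forall>y\<in>Obj C. \<forall>b\<in>Obj C. \<forall>c\<in>Obj C. \<forall>d\<in>Obj C.
       cp (Asc M2 (Ot (t x) (t y)) (Ot (t a) (t b)) (Ot (t c) (t d)))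
        (cp (BM (BM (OM (mu x) (mu y)) (OM (mu a) (mu b))) (i (Ot (t c) (t d))))
         (cp (BM (R (t x) (t a) (t y) (t b)) (i (Ot (t c) (t d))))
          (cp (BM (OM (T2b x a) (T2b y b)) (i (Ot (t c) (t d)))) (R (Bt x a) c (Bt y b) d))))
       = cp (BM (i (Ot (t x) (t y))) (BM (OM (mu a) (mu b)) (OM (mu c) (mu d))))
          (cp (BM (i (Ot (t x) (t y))) (R (t a) (t c) (t b) (t d)))
           (cp (BM (i (Ot (t x) (t y))) (OM (T2b a c) (T2b b d)))
            (cp (R x (Bt a c) y (Bt b d)) (OM (Asc M2 x a c) (Asc M2 y b d)))))))"

definition xi :: "('o,'m) cat \<Rightarrow> ('o,'m) mon \<Rightarrow> ('o,'m) mon \<Rightarrow>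
    ('o \<Rightarrow> 'o \<Rightarrow> 'm) \<Rightarrow> 'm \<Rightarrow> ('o \<Rightarrow> 'o \<Rightarrow> 'm) \<Rightarrow> 'm \<Rightarrow>
    ('o \<Rightarrow> 'o \<Rightarrow> 'o \<Rightarrow> 'o \<Rightarrow> 'm) \<Rightarrow>
    'o \<times> 'm \<Rightarrow> 'o \<times> 'm \<Rightarrow> 'o \<times> 'm \<Rightarrow> 'o \<times> 'm \<Rightarrow> ('o,'m) em_arr" where
  "xi C M1 M2 T2c T0c T2b T0b R A Bt A' Bt' =
    (let L1 = lift_mon C M1 T2c T0c; L2 = lift_mon C M2 T2b T0b in
     (Ten L1 (Ten L2 A Bt) (Ten L2 A' Bt'),
      Ten L2 (Ten L1 A A') (Ten L1 Bt Bt'),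
      Cmp C (TenM M2 (TenM M1 (snd A) (snd A')) (TenM M1 (snd Bt) (snd Bt')))
            (R (fst A) (fst Bt) (fst A') (fst Bt'))))"

end

theory Submission
  imports Defs
begin



lemma in_hom_iff: "f \<in> hom C x y \<longleftrightarrow> f \<in> Arr C \<and> Dom C f = x \<and> Cod C f = y"
  by (simp add: hom_def)

locale cat_ctx =
  fixes C :: "('o,'m) cat"
  assumes cat: "category C"
begin

abbreviation cp (infixr "\<cdot>" 55) where "g \<cdot> f \<equiv> Cmp C g f"

lemmas CT = cat[unfolded category_def]
lemmas CT1 = CT[THEN conjunct1]
lemmas CT2 = CT[THEN conjunct2, THEN conjunct1]
lemmas CT3 = CT[THEN conjunct2, THEN conjunct2, THEN conjunct1]
lemmas CT4 = CT[THEN conjunct2, THEN conjunct2, THEN conjunct2, THEN conjunct1]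
lemmas CT5 = CT[THEN conjunct2, THEN conjunct2, THEN conjunct2, THEN conjunct2]

lemma dom_ob[simp]: "f \<in> Arr C \<Longrightarrow> Dom C f \<in> Obj C"
  using CT1 unfolding in_hom_iff by blast
lemma cod_ob[simp]: "f \<in> Arr C \<Longrightarrow> Cod C f \<in> Obj C"
  using CT1 unfolding in_hom_iff by blast
lemma id_arr[simp]: "x \<in> Obj C \<Longrightarrow> Idt C x \<in> Arr C"
  using CT2 unfolding in_hom_iff by blast
lemma id_dom[simp]: "x \<in> Obj C \<Longrightarrow> Dom C (Idt C x) = x"
  using CT2 unfolding in_hom_iff by blast
lemma id_cod[simp]: "x \<in> Obj C \<Longrightarrow> Cod C (Idt C x) = x"
  using CT2 unfolding in_hom_iff by blast
lemma comp_arr[simp]: "f \<in> Arr C \<Longrightarrow> g \<in> Arr C \<Longrightarrow> Cod C f = Dom C g \<Longrightarrow> g \<cdot> f \<in> Arr C"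
  using CT3 unfolding in_hom_iff by blast
lemma comp_dom[simp]: "f \<in> Arr C \<Longrightarrow> g \<in> Arr C \<Longrightarrow> Cod C f = Dom C g \<Longrightarrow> Dom C (g \<cdot> f) = Dom C f"
  using CT3 unfolding in_hom_iff by blast
lemma comp_cod[simp]: "f \<in> Arr C \<Longrightarrow> g \<in> Arr C \<Longrightarrow> Cod C f = Dom C g \<Longrightarrow> Cod C (g \<cdot> f) = Cod C g"
  using CT3 unfolding in_hom_iff by blast
lemma comp_id_r[simp]: "f \<in> Arr C \<Longrightarrow> Dom C f = x \<Longrightarrow> f \<cdot> Idt C x = f"
  using CT4 unfolding in_hom_iff by blast
lemma comp_id_l[simp]: "f \<in> Arr C \<Longrightarrow> Cod C f = x \<Longrightarrow> Idt C x \<cdot> f = f"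
  using CT4 unfolding in_hom_iff by blast
lemma assoc[simp]: "f \<in> Arr C \<Longrightarrow> g \<in> Arr C \<Longrightarrow> h \<in> Arr C \<Longrightarrow> Cod C f = Dom C g \<Longrightarrow> Cod C g = Dom C h
   \<Longrightarrow> (h \<cdot> g) \<cdot> f = h \<cdot> (g \<cdot> f)"
  using CT5[rule_format, of f g h] by simp

lemma eq_pre: "g \<cdot> f = g' \<cdot> f' \<Longrightarrow> f \<in> Arr C \<Longrightarrow> g \<in> Arr C \<Longrightarrow> f' \<in> Arr C \<Longrightarrow> g' \<in> Arr C \<Longrightarrow>
   Cod C f = Dom C g \<Longrightarrow> Cod C f' = Dom C g' \<Longrightarrow> r \<in> Arr C \<Longrightarrow> Cod C r = Dom C f \<Longrightarrow>
   g \<cdot> (f \<cdot> r) = g' \<cdot> (f' \<cdot> r)"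
proof -
  assume h: "g \<cdot> f = g' \<cdot> f'" "f \<in> Arr C" "g \<in> Arr C" "f' \<in> Arr C" "g' \<in> Arr C"
   "Cod C f = Dom C g" "Cod C f' = Dom C g'" "r \<in> Arr C" "Cod C r = Dom C f"
  have "Dom C f' = Dom C (g' \<cdot> f')" using h(2-9) by simp
  also have "\<dots> = Dom C (g \<cdot> f)" using h(1) by simp
  also have "\<dots> = Dom C f" using h(2-9) by simp
  finally have "Dom C f' = Dom C f" .
  have 1: "g \<cdot> (f \<cdot> r) = (g \<cdot> f) \<cdot> r" by (rule assoc[symmetric]; use h in simp)
  have 2: "g' \<cdot> (f' \<cdot> r) = (g' \<cdot> f') \<cdot> r" by (rule assoc[symmetric]; use h `Dom C f' = Dom C f` in simp)
  show ?thesis by (simp only: 1 2 h(1))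
qed

lemma eq_pre1: "g \<cdot> f = h \<Longrightarrow> f \<in> Arr C \<Longrightarrow> g \<in> Arr C \<Longrightarrow>
   Cod C f = Dom C g \<Longrightarrow> r \<in> Arr C \<Longrightarrow> Cod C r = Dom C f \<Longrightarrow>
   g \<cdot> (f \<cdot> r) = h \<cdot> r"
proof -
  assume h: "g \<cdot> f = h" "f \<in> Arr C" "g \<in> Arr C" "Cod C f = Dom C g" "r \<in> Arr C" "Cod C r = Dom C f"
  have 1: "g \<cdot> (f \<cdot> r) = (g \<cdot> f) \<cdot> r" by (rule assoc[symmetric]; use h in simp)
  show ?thesis by (simp only: 1 h(1))
qed

lemma inverse_unique: "inverse_arr C f g \<Longrightarrow> inverse_arr C f g' \<Longrightarrow> g = g'"
proof -
  assume a: "inverse_arr C f g" and b: "inverse_arr C f g'"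
  have g: "g \<in> Arr C" "Dom C g = Cod C f" "Cod C g = Dom C f" "g \<cdot> f = Idt C (Dom C f)" "f \<cdot> g = Idt C (Cod C f)"
    using a unfolding inverse_arr_def in_hom_iff by auto
  have g': "g' \<in> Arr C" "Dom C g' = Cod C f" "Cod C g' = Dom C f" "g' \<cdot> f = Idt C (Dom C f)" "f \<cdot> g' = Idt C (Cod C f)"
    and f: "f \<in> Arr C" using b unfolding inverse_arr_def in_hom_iff by auto
  have "g = g \<cdot> (f \<cdot> g')" using g g' f by simp
  also have "\<dots> = (g \<cdot> f) \<cdot> g'" by (rule assoc[symmetric]; use g g' f in simp)
  also have "\<dots> = Idt C (Dom C f) \<cdot> g'" by (simp only: g(4))
  also have "\<dots> = g'" using g' by simp
  finally show ?thesis .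
qed

lemma cinv: "iso C f \<Longrightarrow> inverse_arr C f (cinv C f)"
  unfolding iso_def cinv_def by (rule someI_ex)

lemma cinv_eq: "inverse_arr C f g \<Longrightarrow> cinv C f = g"
proof -
  assume a: "inverse_arr C f g"
  hence "iso C f" unfolding iso_def by blast
  thus ?thesis using inverse_unique[OF cinv a] by blast
qed

lemma cinv_arr[simp]: "iso C f \<Longrightarrow> cinv C f \<in> Arr C"
  using cinv[unfolded inverse_arr_def in_hom_iff] by blast
lemma cinv_dom[simp]: "iso C f \<Longrightarrow> Dom C (cinv C f) = Cod C f"
  using cinv[unfolded inverse_arr_def in_hom_iff] by blast
lemma cinv_cod[simp]: "iso C f \<Longrightarrow> Cod C (cinv C f) = Dom C f"
  using cinv[unfolded inverse_arr_def in_hom_iff] by blast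
lemma iso_arr: "iso C f \<Longrightarrow> f \<in> Arr C"
  using cinv[unfolded inverse_arr_def in_hom_iff] by blast
lemma cinv_l: "iso C f \<Longrightarrow> cinv C f \<cdot> f = Idt C (Dom C f)"
  using cinv[unfolded inverse_arr_def in_hom_iff] by blast
lemma cinv_r: "iso C f \<Longrightarrow> f \<cdot> cinv C f = Idt C (Cod C f)"
  using cinv[unfolded inverse_arr_def in_hom_iff] by blast

end




locale bm_ctx =
  fixes C :: "('o,'m) cat" and M :: "('o,'m) mon" and T :: "('o,'m) monad"
    and T2 :: "'o \<Rightarrow> 'o \<Rightarrow> 'm" and T0 :: 'm
  assumes bm: "bimonad C M T T2 T0"
begin

lemma mon: "monoidal C M" using bm[unfolded bimonad_def Let_def] by (rule conjunct1)
lemma mnd: "monad C T" using bm[unfolded bimonad_def Let_def] by (elim conjE)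

lemmas MN = mon[unfolded monoidal_def]
lemmas MN1 = MN[THEN conjunct1]
lemmas MN2 = MN[THEN conjunct2, THEN conjunct1]
lemmas MN3 = MN[THEN conjunct2, THEN conjunct2, THEN conjunct1]
lemmas MN4 = MN[THEN conjunct2, THEN conjunct2, THEN conjunct2, THEN conjunct1]
lemmas MN5 = MN[THEN conjunct2, THEN conjunct2, THEN conjunct2, THEN conjunct2, THEN conjunct1]
lemmas MN6 = MN[THEN conjunct2, THEN conjunct2, THEN conjunct2, THEN conjunct2, THEN conjunct2, THEN conjunct1]
lemmas MN7 = MN[THEN conjunct2, THEN conjunct2, THEN conjunct2, THEN conjunct2, THEN conjunct2, THEN conjunct2, THEN conjunct1]
lemmas MN8 = MN[THEN conjunct2, THEN conjunct2, THEN conjunct2, THEN conjunct2, THEN conjunct2, THEN conjunct2, THEN conjunct2, THEN conjunct1]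
lemmas MN9 = MN[THEN conjunct2, THEN conjunct2, THEN conjunct2, THEN conjunct2, THEN conjunct2, THEN conjunct2, THEN conjunct2, THEN conjunct2, THEN conjunct1]
lemmas MN10 = MN[THEN conjunct2, THEN conjunct2, THEN conjunct2, THEN conjunct2, THEN conjunct2, THEN conjunct2, THEN conjunct2, THEN conjunct2, THEN conjunct2, THEN conjunct1]
lemmas MN11 = MN[THEN conjunct2, THEN conjunct2, THEN conjunct2, THEN conjunct2, THEN conjunct2, THEN conjunct2, THEN conjunct2, THEN conjunct2, THEN conjunct2, THEN conjunct2]
lemmas MD = mnd[unfolded monad_def]
lemmas MD1 = MD[THEN conjunct1]
lemmas MD2 = MD[THEN conjunct2, THEN conjunct1]
lemmas MD3 = MD[THEN conjunct2, THEN conjunct2, THEN conjunct1]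
lemmas MD4 = MD[THEN conjunct2, THEN conjunct2, THEN conjunct2, THEN conjunct1]
lemmas MD5 = MD[THEN conjunct2, THEN conjunct2, THEN conjunct2, THEN conjunct2, THEN conjunct1]
lemmas MD6 = MD[THEN conjunct2, THEN conjunct2, THEN conjunct2, THEN conjunct2, THEN conjunct2, THEN conjunct1]
lemmas MD7 = MD[THEN conjunct2, THEN conjunct2, THEN conjunct2, THEN conjunct2, THEN conjunct2, THEN conjunct2, THEN conjunct1]
lemmas MD8 = MD[THEN conjunct2, THEN conjunct2, THEN conjunct2, THEN conjunct2, THEN conjunct2, THEN conjunct2, THEN conjunct2]
lemmas BM = bm[unfolded bimonad_def Let_def]
lemmas BM1 = BM[THEN conjunct1]
lemmas BM2 = BM[THEN conjunct2, THEN conjunct1]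
lemmas BM3 = BM[THEN conjunct2, THEN conjunct2, THEN conjunct1]
lemmas BM4 = BM[THEN conjunct2, THEN conjunct2, THEN conjunct2, THEN conjunct1]
lemmas BM5 = BM[THEN conjunct2, THEN conjunct2, THEN conjunct2, THEN conjunct2, THEN conjunct1]
lemmas BM6 = BM[THEN conjunct2, THEN conjunct2, THEN conjunct2, THEN conjunct2, THEN conjunct2, THEN conjunct1]
lemmas BM7 = BM[THEN conjunct2, THEN conjunct2, THEN conjunct2, THEN conjunct2, THEN conjunct2, THEN conjunct2, THEN conjunct1]
lemmas BM8 = BM[THEN conjunct2, THEN conjunct2, THEN conjunct2, THEN conjunct2, THEN conjunct2, THEN conjunct2, THEN conjunct2, THEN conjunct1]
lemmas BM9 = BM[THEN conjunct2, THEN conjunct2, THEN conjunct2, THEN conjunct2, THEN conjunct2, THEN conjunct2, THEN conjunct2, THEN conjunct2, THEN conjunct1]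
lemmas BM10 = BM[THEN conjunct2, THEN conjunct2, THEN conjunct2, THEN conjunct2, THEN conjunct2, THEN conjunct2, THEN conjunct2, THEN conjunct2, THEN conjunct2, THEN conjunct1]
lemmas BM11 = BM[THEN conjunct2, THEN conjunct2, THEN conjunct2, THEN conjunct2, THEN conjunct2, THEN conjunct2, THEN conjunct2, THEN conjunct2, THEN conjunct2, THEN conjunct2, THEN conjunct1]
lemmas BM12 = BM[THEN conjunct2, THEN conjunct2, THEN conjunct2, THEN conjunct2, THEN conjunct2, THEN conjunct2, THEN conjunct2, THEN conjunct2, THEN conjunct2, THEN conjunct2, THEN conjunct2]

lemma catC: "category C" by (rule MN1)

sublocale cat_ctx C by (unfold_locales, rule catC)

abbreviation t where "t \<equiv> TO T"
abbreviation tm where "tm \<equiv> TM T"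
abbreviation mu where "mu \<equiv> Mu T"
abbreviation eta where "eta \<equiv> Eta T"
abbreviation ten (infixr "\<otimes>" 60) where "x \<otimes> y \<equiv> Ten M x y"
abbreviation tenm (infixr "\<odot>" 60) where "f \<odot> g \<equiv> TenM M f g"
abbreviation I where "I \<equiv> MUnit M"
abbreviation i where "i \<equiv> Idt C"

lemma fnc: "functor C t tm" by (rule MD2)
lemmas FN = fnc[unfolded functor_def]
lemmas FN1 = FN[THEN conjunct1]
lemmas FN2 = FN[THEN conjunct2, THEN conjunct1]
lemmas FN3 = FN[THEN conjunct2, THEN conjunct2, THEN conjunct1]
lemmas FN4 = FN[THEN conjunct2, THEN conjunct2, THEN conjunct2]

lemma bif: "bifunctor C (Ten M) (TenM M)" by (rule MN2)
lemmas BF = bif[unfolded bifunctor_def]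
lemmas BF1 = BF[THEN conjunct1]
lemmas BF2 = BF[THEN conjunct2, THEN conjunct1]
lemmas BF3 = BF[THEN conjunct2, THEN conjunct2, THEN conjunct1]
lemmas BF4 = BF[THEN conjunct2, THEN conjunct2, THEN conjunct2]

lemma t_ob[simp]: "x \<in> Obj C \<Longrightarrow> t x \<in> Obj C" using FN1 by blast
lemma tm_arr[simp]: "f \<in> Arr C \<Longrightarrow> tm f \<in> Arr C" using FN2 unfolding in_hom_iff by blast
lemma tm_dom[simp]: "f \<in> Arr C \<Longrightarrow> Dom C (tm f) = t (Dom C f)" using FN2 unfolding in_hom_iff by blast
lemma tm_cod[simp]: "f \<in> Arr C \<Longrightarrow> Cod C (tm f) = t (Cod C f)" using FN2 unfolding in_hom_iff by blast
lemma tm_id[simp]: "x \<in> Obj C \<Longrightarrow> tm (i x) = i (t x)" using FN3 by blast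
lemma tm_comp: "f \<in> Arr C \<Longrightarrow> g \<in> Arr C \<Longrightarrow> Cod C f = Dom C g \<Longrightarrow> tm (g \<cdot> f) = tm g \<cdot> tm f"
  using FN4 by blast

lemma ten_ob[simp]: "x \<in> Obj C \<Longrightarrow> y \<in> Obj C \<Longrightarrow> x \<otimes> y \<in> Obj C" using BF1 by blast
lemma tenm_arr[simp]: "f \<in> Arr C \<Longrightarrow> g \<in> Arr C \<Longrightarrow> f \<odot> g \<in> Arr C" using BF2 unfolding in_hom_iff by blast
lemma tenm_dom[simp]: "f \<in> Arr C \<Longrightarrow> g \<in> Arr C \<Longrightarrow> Dom C (f \<odot> g) = Dom C f \<otimes> Dom C g" using BF2 unfolding in_hom_iff by blast
lemma tenm_cod[simp]: "f \<in> Arr C \<Longrightarrow> g \<in> Arr C \<Longrightarrow> Cod C (f \<odot> g) = Cod C f \<otimes> Cod C g" using BF2 unfolding in_hom_iff by blast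
lemma tenm_id[simp]: "x \<in> Obj C \<Longrightarrow> y \<in> Obj C \<Longrightarrow> i x \<odot> i y = i (x \<otimes> y)" using BF3 by blast
lemma tenm_comp: "f \<in> Arr C \<Longrightarrow> f' \<in> Arr C \<Longrightarrow> g \<in> Arr C \<Longrightarrow> g' \<in> Arr C \<Longrightarrow>
   Cod C f = Dom C f' \<Longrightarrow> Cod C g = Dom C g' \<Longrightarrow> (f' \<cdot> f) \<odot> (g' \<cdot> g) = (f' \<odot> g') \<cdot> (f \<odot> g)"
  using BF4 by blast

lemma mu_arr[simp]: "x \<in> Obj C \<Longrightarrow> mu x \<in> Arr C" using MD3 unfolding in_hom_iff by blast
lemma mu_dom[simp]: "x \<in> Obj C \<Longrightarrow> Dom C (mu x) = t (t x)" using MD3 unfolding in_hom_iff by blast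
lemma mu_cod[simp]: "x \<in> Obj C \<Longrightarrow> Cod C (mu x) = t x" using MD3 unfolding in_hom_iff by blast
lemma eta_arr[simp]: "x \<in> Obj C \<Longrightarrow> eta x \<in> Arr C" using MD3 unfolding in_hom_iff by blast
lemma eta_dom[simp]: "x \<in> Obj C \<Longrightarrow> Dom C (eta x) = x" using MD3 unfolding in_hom_iff by blast
lemma eta_cod[simp]: "x \<in> Obj C \<Longrightarrow> Cod C (eta x) = t x" using MD3 unfolding in_hom_iff by blast
lemma mu_nat0: "f \<in> Arr C \<Longrightarrow> mu (Cod C f) \<cdot> tm (tm f) = tm f \<cdot> mu (Dom C f)" using MD4 by blast
lemma eta_nat0: "f \<in> Arr C \<Longrightarrow> eta (Cod C f) \<cdot> f = tm f \<cdot> eta (Dom C f)" using MD5 by blast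
lemma mu_assoc: "x \<in> Obj C \<Longrightarrow> mu x \<cdot> tm (mu x) = mu x \<cdot> mu (t x)" using MD6 by blast
lemma mu_eta1: "x \<in> Obj C \<Longrightarrow> mu x \<cdot> eta (t x) = i (t x)" using MD7 by blast
lemma mu_eta2: "x \<in> Obj C \<Longrightarrow> mu x \<cdot> tm (eta x) = i (t x)" using MD8 by blast

lemma I_ob[simp]: "I \<in> Obj C" using MN3 by blast
lemma asc_arr[simp]: "x \<in> Obj C \<Longrightarrow> y \<in> Obj C \<Longrightarrow> z \<in> Obj C \<Longrightarrow> Asc M x y z \<in> Arr C" using MN4 unfolding in_hom_iff by blast
lemma asc_dom[simp]: "x \<in> Obj C \<Longrightarrow> y \<in> Obj C \<Longrightarrow> z \<in> Obj C \<Longrightarrow> Dom C (Asc M x y z) = (x \<otimes> y) \<otimes> z" using MN4 unfolding in_hom_iff by blast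
lemma asc_cod[simp]: "x \<in> Obj C \<Longrightarrow> y \<in> Obj C \<Longrightarrow> z \<in> Obj C \<Longrightarrow> Cod C (Asc M x y z) = x \<otimes> (y \<otimes> z)" using MN4 unfolding in_hom_iff by blast
lemma asc_iso: "x \<in> Obj C \<Longrightarrow> y \<in> Obj C \<Longrightarrow> z \<in> Obj C \<Longrightarrow> iso C (Asc M x y z)" using MN4 by blast
lemma lu_arr[simp]: "x \<in> Obj C \<Longrightarrow> Lu M x \<in> Arr C" using MN5 unfolding in_hom_iff by blast
lemma lu_dom[simp]: "x \<in> Obj C \<Longrightarrow> Dom C (Lu M x) = I \<otimes> x" using MN5 unfolding in_hom_iff by blast
lemma lu_cod[simp]: "x \<in> Obj C \<Longrightarrow> Cod C (Lu M x) = x" using MN5 unfolding in_hom_iff by blast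
lemma lu_iso: "x \<in> Obj C \<Longrightarrow> iso C (Lu M x)" using MN5 by blast
lemma ru_arr[simp]: "x \<in> Obj C \<Longrightarrow> Ru M x \<in> Arr C" using MN6 unfolding in_hom_iff by blast
lemma ru_dom[simp]: "x \<in> Obj C \<Longrightarrow> Dom C (Ru M x) = x \<otimes> I" using MN6 unfolding in_hom_iff by blast
lemma ru_cod[simp]: "x \<in> Obj C \<Longrightarrow> Cod C (Ru M x) = x" using MN6 unfolding in_hom_iff by blast
lemma ru_iso: "x \<in> Obj C \<Longrightarrow> iso C (Ru M x)" using MN6 by blast
lemma asc_nat0: "f \<in> Arr C \<Longrightarrow> g \<in> Arr C \<Longrightarrow> h \<in> Arr C \<Longrightarrow>
       Asc M (Cod C f) (Cod C g) (Cod C h) \<cdot> ((f \<odot> g) \<odot> h) = (f \<odot> (g \<odot> h)) \<cdot> Asc M (Dom C f) (Dom C g) (Dom C h)"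
  using MN7 by blast
lemma lu_nat0: "f \<in> Arr C \<Longrightarrow> Lu M (Cod C f) \<cdot> (i I \<odot> f) = f \<cdot> Lu M (Dom C f)"
  using MN8 by blast
lemma ru_nat0: "f \<in> Arr C \<Longrightarrow> Ru M (Cod C f) \<cdot> (f \<odot> i I) = f \<cdot> Ru M (Dom C f)"
  using MN9 by blast
lemma pentagon: "w \<in> Obj C \<Longrightarrow> x \<in> Obj C \<Longrightarrow> y \<in> Obj C \<Longrightarrow> z \<in> Obj C \<Longrightarrow>
       Asc M w x (y \<otimes> z) \<cdot> Asc M (w \<otimes> x) y z
       = (i w \<odot> Asc M x y z) \<cdot> (Asc M w (x \<otimes> y) z \<cdot> (Asc M w x y \<odot> i z))"
  using MN10 by blast
lemma triangle: "x \<in> Obj C \<Longrightarrow> y \<in> Obj C \<Longrightarrow>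
       (i x \<odot> Lu M y) \<cdot> Asc M x I y = Ru M x \<odot> i y"
  using MN11 by blast

lemma T2_arr[simp]: "x \<in> Obj C \<Longrightarrow> y \<in> Obj C \<Longrightarrow> T2 x y \<in> Arr C" using BM3 unfolding in_hom_iff by blast
lemma T2_dom[simp]: "x \<in> Obj C \<Longrightarrow> y \<in> Obj C \<Longrightarrow> Dom C (T2 x y) = t (x \<otimes> y)" using BM3 unfolding in_hom_iff by blast
lemma T2_cod[simp]: "x \<in> Obj C \<Longrightarrow> y \<in> Obj C \<Longrightarrow> Cod C (T2 x y) = t x \<otimes> t y" using BM3 unfolding in_hom_iff by blast
lemma T0_arr[simp]: "T0 \<in> Arr C" using BM4 unfolding in_hom_iff by blast
lemma T0_dom[simp]: "Dom C T0 = t I" using BM4 unfolding in_hom_iff by blast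
lemma T0_cod[simp]: "Cod C T0 = I" using BM4 unfolding in_hom_iff by blast
lemma T2_nat0: "f \<in> Arr C \<Longrightarrow> g \<in> Arr C \<Longrightarrow>
       T2 (Cod C f) (Cod C g) \<cdot> tm (f \<odot> g) = (tm f \<odot> tm g) \<cdot> T2 (Dom C f) (Dom C g)"
  using BM5 by blast
lemma T2_asc: "x \<in> Obj C \<Longrightarrow> y \<in> Obj C \<Longrightarrow> z \<in> Obj C \<Longrightarrow>
       Asc M (t x) (t y) (t z) \<cdot> ((T2 x y \<odot> i (t z)) \<cdot> T2 (x \<otimes> y) z)
       = (i (t x) \<odot> T2 y z) \<cdot> (T2 x (y \<otimes> z) \<cdot> tm (Asc M x y z))"
  using BM6 by blast
lemma T2_lu: "x \<in> Obj C \<Longrightarrow> Lu M (t x) \<cdot> ((T0 \<odot> i (t x)) \<cdot> T2 I x) = tm (Lu M x)"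
  using BM7 by blast
lemma T2_ru: "x \<in> Obj C \<Longrightarrow> Ru M (t x) \<cdot> ((i (t x) \<odot> T0) \<cdot> T2 x I) = tm (Ru M x)"
  using BM8 by blast
lemma T2_mu: "x \<in> Obj C \<Longrightarrow> y \<in> Obj C \<Longrightarrow>
       T2 x y \<cdot> mu (x \<otimes> y) = (mu x \<odot> mu y) \<cdot> (T2 (t x) (t y) \<cdot> tm (T2 x y))"
  using BM9 by blast
lemma T0_mu: "T0 \<cdot> mu I = T0 \<cdot> tm T0"
  using BM10 by blast
lemma T2_eta: "x \<in> Obj C \<Longrightarrow> y \<in> Obj C \<Longrightarrow> T2 x y \<cdot> eta (x \<otimes> y) = eta x \<odot> eta y"
  using BM11 by blast
lemma T0_eta: "T0 \<cdot> eta I = i I"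
  using BM12 by blast

end



context bm_ctx
begin

lemma tenm_merge: "f \<in> Arr C \<Longrightarrow> f' \<in> Arr C \<Longrightarrow> g \<in> Arr C \<Longrightarrow> g' \<in> Arr C \<Longrightarrow>
   Cod C f = Dom C f' \<Longrightarrow> Cod C g = Dom C g' \<Longrightarrow> (f' \<odot> g') \<cdot> (f \<odot> g) = (f' \<cdot> f) \<odot> (g' \<cdot> g)"
  by (simp add: tenm_comp)
lemma tenm_merge_c: "f \<in> Arr C \<Longrightarrow> f' \<in> Arr C \<Longrightarrow> g \<in> Arr C \<Longrightarrow> g' \<in> Arr C \<Longrightarrow>
   Cod C f = Dom C f' \<Longrightarrow> Cod C g = Dom C g' \<Longrightarrow> r \<in> Arr C \<Longrightarrow> Cod C r = Dom C f \<otimes> Dom C g \<Longrightarrow>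
   (f' \<odot> g') \<cdot> ((f \<odot> g) \<cdot> r) = ((f' \<cdot> f) \<odot> (g' \<cdot> g)) \<cdot> r"
  by (simp add: tenm_comp)

lemma T2_nat: "f \<in> Arr C \<Longrightarrow> g \<in> Arr C \<Longrightarrow> Cod C f = x \<Longrightarrow> Cod C g = y \<Longrightarrow>
       T2 x y \<cdot> tm (f \<odot> g) = (tm f \<odot> tm g) \<cdot> T2 (Dom C f) (Dom C g)"
  using T2_nat0 by blast
lemma T2_nat_c: "f \<in> Arr C \<Longrightarrow> g \<in> Arr C \<Longrightarrow> Cod C f = x \<Longrightarrow> Cod C g = y \<Longrightarrow>
       r \<in> Arr C \<Longrightarrow> Cod C r = t (Dom C f \<otimes> Dom C g) \<Longrightarrow>
       T2 x y \<cdot> (tm (f \<odot> g) \<cdot> r) = (tm f \<odot> tm g) \<cdot> (T2 (Dom C f) (Dom C g) \<cdot> r)"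
  by (rule eq_pre[OF T2_nat]) auto
lemma mu_nat: "f \<in> Arr C \<Longrightarrow> Cod C f = x \<Longrightarrow> mu x \<cdot> tm (tm f) = tm f \<cdot> mu (Dom C f)"
  using mu_nat0 by blast
lemma mu_nat_c: "f \<in> Arr C \<Longrightarrow> Cod C f = x \<Longrightarrow> r \<in> Arr C \<Longrightarrow> Cod C r = t (t (Dom C f)) \<Longrightarrow>
   mu x \<cdot> (tm (tm f) \<cdot> r) = tm f \<cdot> (mu (Dom C f) \<cdot> r)"
  by (rule eq_pre[OF mu_nat]) auto
lemma T2_mu_c: "x \<in> Obj C \<Longrightarrow> y \<in> Obj C \<Longrightarrow> r \<in> Arr C \<Longrightarrow> Cod C r = t (t (x \<otimes> y)) \<Longrightarrow>
       T2 x y \<cdot> (mu (x \<otimes> y) \<cdot> r) = (mu x \<odot> mu y) \<cdot> (T2 (t x) (t y) \<cdot> (tm (T2 x y) \<cdot> r))"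
proof -
  assume a: "x \<in> Obj C" "y \<in> Obj C" "r \<in> Arr C" "Cod C r = t (t (x \<otimes> y))"
  have "T2 x y \<cdot> (mu (x \<otimes> y) \<cdot> r) = (T2 x y \<cdot> mu (x \<otimes> y)) \<cdot> r" using a by simp
  also have "\<dots> = ((mu x \<odot> mu y) \<cdot> (T2 (t x) (t y) \<cdot> tm (T2 x y))) \<cdot> r" using a by (simp only: T2_mu)
  also have "\<dots> = (mu x \<odot> mu y) \<cdot> (T2 (t x) (t y) \<cdot> (tm (T2 x y) \<cdot> r))" using a by simp
  finally show ?thesis .
qed

lemma alg_iff: "algebra C T (a,al) \<longleftrightarrow> a \<in> Obj C \<and> al \<in> Arr C \<and> Dom C al = t a \<and> Cod C al = a \<and>
   al \<cdot> eta a = i a \<and> al \<cdot> tm al = al \<cdot> mu a"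
  by (auto simp: algebra_def in_hom_iff)

lemma alg_hom_iff: "alg_hom C T A B f \<longleftrightarrow> algebra C T A \<and> algebra C T B \<and> f \<in> Arr C \<and>
   Dom C f = fst A \<and> Cod C f = fst B \<and> f \<cdot> snd A = snd B \<cdot> tm f"
  by (auto simp: alg_hom_def in_hom_iff)

lemma alg_mult_c: "algebra C T (a,al) \<Longrightarrow> r \<in> Arr C \<Longrightarrow> Cod C r = t (t a) \<Longrightarrow>
   al \<cdot> (tm al \<cdot> r) = al \<cdot> (mu a \<cdot> r)"
  unfolding alg_iff by (auto intro: eq_pre)

lemma lift_ten_simp: "lift_ten C M T2 (a,al) (b,be) = (a \<otimes> b, (al \<odot> be) \<cdot> T2 a b)"
  by (simp add: lift_ten_def)

lemma alg_lt: "algebra C T (a,al) \<Longrightarrow> algebra C T (b,be) \<Longrightarrow> algebra C T (a \<otimes> b, (al \<odot> be) \<cdot> T2 a b)"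
proof -
  assume A: "algebra C T (a,al)" and B: "algebra C T (b,be)"
  note a = A[unfolded alg_iff] and b = B[unfolded alg_iff]
  have u: "((al \<odot> be) \<cdot> T2 a b) \<cdot> eta (a \<otimes> b) = i (a \<otimes> b)"
    using a b by (simp add: T2_eta tenm_merge)
  have m: "((al \<odot> be) \<cdot> T2 a b) \<cdot> tm ((al \<odot> be) \<cdot> T2 a b) = ((al \<odot> be) \<cdot> T2 a b) \<cdot> mu (a \<otimes> b)"
    using a b by (simp add: tm_comp T2_nat_c T2_mu T2_mu_c tenm_merge_c)
  show ?thesis unfolding alg_iff using a b u m by simp
qed

end



lemma EM_Obj[simp]: "Obj (EM C T) = {A. algebra C T A}" by (simp add: EM_def)
lemma EM_Arr[simp]: "Arr (EM C T) = {p. alg_hom C T (fst p) (fst (snd p)) (snd (snd p))}" by (simp add: EM_def)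
lemma EM_Dom[simp]: "Dom (EM C T) p = fst p" by (simp add: EM_def)
lemma EM_Cod[simp]: "Cod (EM C T) p = fst (snd p)" by (simp add: EM_def)
lemma EM_Idt[simp]: "Idt (EM C T) A = (A, A, Idt C (fst A))" by (simp add: EM_def)
lemma EM_Cmp[simp]: "Cmp (EM C T) q p = (fst p, fst (snd q), Cmp C (snd (snd q)) (snd (snd p)))" by (simp add: EM_def)

lemma LM_Ten[simp]: "Ten (lift_mon C M T2 T0) = lift_ten C M T2" by (simp add: lift_mon_def Let_def)
lemma LM_TenM[simp]: "TenM (lift_mon C M T2 T0) p q = (lift_ten C M T2 (fst p) (fst q),
   lift_ten C M T2 (fst (snd p)) (fst (snd q)), TenM M (snd (snd p)) (snd (snd q)))" by (simp add: lift_mon_def Let_def)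
lemma LM_MUnit[simp]: "MUnit (lift_mon C M T2 T0) = (MUnit M, T0)" by (simp add: lift_mon_def Let_def)
lemma LM_Asc[simp]: "Asc (lift_mon C M T2 T0) A B D = (lift_ten C M T2 (lift_ten C M T2 A B) D,
   lift_ten C M T2 A (lift_ten C M T2 B D), Asc M (fst A) (fst B) (fst D))" by (simp add: lift_mon_def Let_def)
lemma LM_Lu[simp]: "Lu (lift_mon C M T2 T0) A = (lift_ten C M T2 (MUnit M, T0) A, A, Lu M (fst A))"
  by (simp add: lift_mon_def Let_def)
lemma LM_Ru[simp]: "Ru (lift_mon C M T2 T0) A = (lift_ten C M T2 A (MUnit M, T0), A, Ru M (fst A))"
  by (simp add: lift_mon_def Let_def)
lemma lt_fst[simp]: "fst (lift_ten C M T2 A B) = Ten M (fst A) (fst B)" by (simp add: lift_ten_def)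
lemma lt_snd[simp]: "snd (lift_ten C M T2 A B) = Cmp C (TenM M (snd A) (snd B)) (T2 (fst A) (fst B))" by (simp add: lift_ten_def)

context bm_ctx
begin

lemma algE: "algebra C T A \<Longrightarrow> fst A \<in> Obj C \<and> snd A \<in> Arr C \<and> Dom C (snd A) = t (fst A) \<and> Cod C (snd A) = fst A \<and>
   snd A \<cdot> eta (fst A) = i (fst A) \<and> snd A \<cdot> tm (snd A) = snd A \<cdot> mu (fst A)"
  by (cases A) (simp add: alg_iff)

lemma algI: "fst A \<in> Obj C \<Longrightarrow> snd A \<in> Arr C \<Longrightarrow> Dom C (snd A) = t (fst A) \<Longrightarrow> Cod C (snd A) = fst A \<Longrightarrow>
   snd A \<cdot> eta (fst A) = i (fst A) \<Longrightarrow> snd A \<cdot> tm (snd A) = snd A \<cdot> mu (fst A) \<Longrightarrow> algebra C T A"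
  by (cases A) (simp add: alg_iff)

lemma alg_lt': "algebra C T A \<Longrightarrow> algebra C T B \<Longrightarrow> algebra C T (lift_ten C M T2 A B)"
  by (cases A, cases B) (simp add: lift_ten_simp alg_lt)

lemma alg_unit: "algebra C T (I, T0)"
  by (simp add: alg_iff T0_eta T0_mu)

lemma alg_hom_id: "algebra C T A \<Longrightarrow> alg_hom C T A A (i (fst A))"
  by (simp add: alg_hom_iff algE)

lemma alg_hom_comp: "alg_hom C T A B f \<Longrightarrow> alg_hom C T B D g \<Longrightarrow> alg_hom C T A D (g \<cdot> f)"
proof -
  assume f: "alg_hom C T A B f" and g: "alg_hom C T B D g"
  note F = f[unfolded alg_hom_iff] and G = g[unfolded alg_hom_iff]
  note a = algE[of A] and b = algE[of B] and d = algE[of D]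
  have Fe: "f \<cdot> snd A = snd B \<cdot> tm f" and Ge: "g \<cdot> snd B = snd D \<cdot> tm g" using F G by simp_all
  have "(g \<cdot> f) \<cdot> snd A = snd D \<cdot> tm (g \<cdot> f)"
    using F G a b d by (simp add: eq_pre[OF Ge] tm_comp)
  thus ?thesis using F G a b d by (simp add: alg_hom_iff)
qed

lemma cat_EM: "category (EM C T)"
  unfolding category_def
proof (intro conjI ballI impI)
  fix p assume "p \<in> Arr (EM C T)"
  thus "Dom (EM C T) p \<in> Obj (EM C T)" "Cod (EM C T) p \<in> Obj (EM C T)" by (simp_all add: alg_hom_iff)
next
  fix A assume "A \<in> Obj (EM C T)"
  thus "Idt (EM C T) A \<in> hom (EM C T) A A" by (simp add: in_hom_iff alg_hom_id)
next
  fix p q assume "p \<in> Arr (EM C T)" "q \<in> Arr (EM C T)" "Cod (EM C T) p = Dom (EM C T) q"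
  thus "Cmp (EM C T) q p \<in> hom (EM C T) (Dom (EM C T) p) (Cod (EM C T) q)"
    by (simp add: in_hom_iff) (metis alg_hom_comp)
next
  fix p assume "p \<in> Arr (EM C T)"
  hence p: "alg_hom C T (fst p) (fst (snd p)) (snd (snd p))" by simp
  note P = p[unfolded alg_hom_iff]
  show "Cmp (EM C T) p (Idt (EM C T) (Dom (EM C T) p)) = p"
       "Cmp (EM C T) (Idt (EM C T) (Cod (EM C T) p)) p = p"
    using P by (simp_all add: prod_eq_iff)
next
  fix p q r assume "p \<in> Arr (EM C T)" "q \<in> Arr (EM C T)" "r \<in> Arr (EM C T)"
    "Cod (EM C T) p = Dom (EM C T) q" "Cod (EM C T) q = Dom (EM C T) r"
  thus "Cmp (EM C T) r (Cmp (EM C T) q p) = Cmp (EM C T) (Cmp (EM C T) r q) p"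
    by (simp add: alg_hom_iff)
qed

lemma iso_EM: "p \<in> Arr (EM C T) \<Longrightarrow> iso C (snd (snd p)) \<Longrightarrow>
   iso (EM C T) p \<and> cinv (EM C T) p = (fst (snd p), fst p, cinv C (snd (snd p)))"
proof -
  assume p: "p \<in> Arr (EM C T)" and iso: "iso C (snd (snd p))"
  obtain A B f where pe: "p = (A, B, f)" by (cases p) auto
  have h: "alg_hom C T A B f" using p pe by simp
  note H = h[unfolded alg_hom_iff] and a = algE[of A] and b = algE[of B]
  have fi: "iso C f" using iso pe by simp
  let ?g = "cinv C f"
  have g1: "?g \<cdot> f = i (fst A)" "f \<cdot> ?g = i (fst B)" using cinv_l[OF fi] cinv_r[OF fi] H by simp_all
  have ga: "?g \<in> Arr C" "Dom C ?g = fst B" "Cod C ?g = fst A" using fi H by simp_all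
  have tt: "tm f \<cdot> tm ?g = i (t (fst B))" using H ga a b g1 by (simp add: tm_comp[symmetric])
  have Fe: "f \<cdot> snd A = snd B \<cdot> tm f" using H by simp
  have "?g \<cdot> snd B = ?g \<cdot> (snd B \<cdot> (tm f \<cdot> tm ?g))" using ga H a b tt by simp
  also have "\<dots> = ?g \<cdot> (f \<cdot> (snd A \<cdot> tm ?g))" using ga H a b tt by (simp add: eq_pre[OF Fe])
  also have "\<dots> = snd A \<cdot> tm ?g" using ga H a b by (simp add: eq_pre1[OF g1(1)])
  finally have gh: "alg_hom C T B A ?g" using ga H a b by (simp add: alg_hom_iff)
  have inv: "inverse_arr (EM C T) p (B, A, ?g)"
    unfolding inverse_arr_def using h gh g1 pe by (simp add: in_hom_iff)
  interpret E: cat_ctx "EM C T" by (unfold_locales, rule cat_EM)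
  have "iso (EM C T) p" unfolding iso_def using inv by blast
  moreover have "cinv (EM C T) p = (B, A, ?g)" by (rule E.cinv_eq[OF inv])
  ultimately show ?thesis using pe by simp
qed

end



context bm_ctx
begin

lemma asc_nat: "f \<in> Arr C \<Longrightarrow> g \<in> Arr C \<Longrightarrow> h \<in> Arr C \<Longrightarrow> Cod C f = x \<Longrightarrow> Cod C g = y \<Longrightarrow> Cod C h = z \<Longrightarrow>
       Asc M x y z \<cdot> ((f \<odot> g) \<odot> h) = (f \<odot> (g \<odot> h)) \<cdot> Asc M (Dom C f) (Dom C g) (Dom C h)"
  using asc_nat0 by blast
lemma asc_nat_r: "f \<in> Arr C \<Longrightarrow> g \<in> Arr C \<Longrightarrow> h \<in> Arr C \<Longrightarrow> Dom C f = x \<Longrightarrow> Dom C g = y \<Longrightarrow> Dom C h = z \<Longrightarrow>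
       (f \<odot> (g \<odot> h)) \<cdot> Asc M x y z = Asc M (Cod C f) (Cod C g) (Cod C h) \<cdot> ((f \<odot> g) \<odot> h)"
  using asc_nat0 by metis
lemma lu_nat: "f \<in> Arr C \<Longrightarrow> Cod C f = x \<Longrightarrow> Lu M x \<cdot> (i I \<odot> f) = f \<cdot> Lu M (Dom C f)"
  using lu_nat0 by blast
lemma lu_nat_r: "f \<in> Arr C \<Longrightarrow> Dom C f = x \<Longrightarrow> f \<cdot> Lu M x = Lu M (Cod C f) \<cdot> (i I \<odot> f)"
  using lu_nat0 by metis
lemma ru_nat: "f \<in> Arr C \<Longrightarrow> Cod C f = x \<Longrightarrow> Ru M x \<cdot> (f \<odot> i I) = f \<cdot> Ru M (Dom C f)"
  using ru_nat0 by blast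
lemma ru_nat_r: "f \<in> Arr C \<Longrightarrow> Dom C f = x \<Longrightarrow> f \<cdot> Ru M x = Ru M (Cod C f) \<cdot> (f \<odot> i I)"
  using ru_nat0 by metis

lemma alg_hom_tenm: "alg_hom C T A A' f \<Longrightarrow> alg_hom C T B B' g \<Longrightarrow>
   alg_hom C T (lift_ten C M T2 A B) (lift_ten C M T2 A' B') (f \<odot> g)"
proof -
  assume f: "alg_hom C T A A' f" and g: "alg_hom C T B B' g"
  note F = f[unfolded alg_hom_iff] and G = g[unfolded alg_hom_iff]
  note a = algE[of A] and b = algE[of B] and a' = algE[of A'] and b' = algE[of B']
  have "(f \<odot> g) \<cdot> ((snd A \<odot> snd B) \<cdot> T2 (fst A) (fst B)) =
        ((snd A' \<odot> snd B') \<cdot> T2 (fst A') (fst B')) \<cdot> tm (f \<odot> g)"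
    using F G a b a' b' by (simp add: tenm_merge tenm_merge_c T2_nat)
  thus ?thesis using F G a b a' b' by (simp add: alg_hom_iff alg_lt')
qed

lemma alg_hom_asc: "algebra C T A \<Longrightarrow> algebra C T B \<Longrightarrow> algebra C T D \<Longrightarrow>
  alg_hom C T (lift_ten C M T2 (lift_ten C M T2 A B) D) (lift_ten C M T2 A (lift_ten C M T2 B D))
     (Asc M (fst A) (fst B) (fst D))"
proof -
  assume A: "algebra C T A" and B: "algebra C T B" and D: "algebra C T D"
  obtain a al where Ae: "A = (a, al)" by (cases A)
  obtain b be where Be: "B = (b, be)" by (cases B)
  obtain d de where De: "D = (d, de)" by (cases D)
  have x: "a \<in> Obj C" "al \<in> Arr C" "Dom C al = t a" "Cod C al = a"
          "b \<in> Obj C" "be \<in> Arr C" "Dom C be = t b" "Cod C be = b"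
          "d \<in> Obj C" "de \<in> Arr C" "Dom C de = t d" "Cod C de = d"
    using A B D Ae Be De by (simp_all add: alg_iff)
  have "Asc M a b d \<cdot> ((((al \<odot> be) \<cdot> T2 a b) \<odot> de) \<cdot> T2 (a \<otimes> b) d)
      = (Asc M a b d \<cdot> ((al \<odot> be) \<odot> de)) \<cdot> ((T2 a b \<odot> i (t d)) \<cdot> T2 (a \<otimes> b) d)"
    using x by (simp add: tenm_merge tenm_merge_c)
  also have "\<dots> = (al \<odot> (be \<odot> de)) \<cdot> (Asc M (t a) (t b) (t d) \<cdot> ((T2 a b \<odot> i (t d)) \<cdot> T2 (a \<otimes> b) d))"
    using x by (simp add: asc_nat)
  also have "\<dots> = (al \<odot> (be \<odot> de)) \<cdot> ((i (t a) \<odot> T2 b d) \<cdot> (T2 a (b \<otimes> d) \<cdot> tm (Asc M a b d)))"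
    using x by (simp add: T2_asc)
  also have "\<dots> = ((al \<odot> ((be \<odot> de) \<cdot> T2 b d)) \<cdot> T2 a (b \<otimes> d)) \<cdot> tm (Asc M a b d)"
    using x by (simp add: tenm_merge tenm_merge_c)
  finally have e: "Asc M a b d \<cdot> ((((al \<odot> be) \<cdot> T2 a b) \<odot> de) \<cdot> T2 (a \<otimes> b) d) =
     ((al \<odot> ((be \<odot> de) \<cdot> T2 b d)) \<cdot> T2 a (b \<otimes> d)) \<cdot> tm (Asc M a b d)" .
  show ?thesis using e x A B D Ae Be De by (simp add: alg_hom_iff alg_lt' alg_lt lift_ten_simp)
qed

lemma alg_hom_lu: "algebra C T A \<Longrightarrow> alg_hom C T (lift_ten C M T2 (I, T0) A) A (Lu M (fst A))"
proof -
  assume A: "algebra C T A"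
  obtain a al where Ae: "A = (a, al)" by (cases A)
  have x: "a \<in> Obj C" "al \<in> Arr C" "Dom C al = t a" "Cod C al = a"
    using A Ae by (simp_all add: alg_iff)
  have "al \<cdot> tm (Lu M a) = al \<cdot> (Lu M (t a) \<cdot> ((T0 \<odot> i (t a)) \<cdot> T2 I a))"
    using x by (simp add: T2_lu)
  also have "\<dots> = (al \<cdot> Lu M (t a)) \<cdot> ((T0 \<odot> i (t a)) \<cdot> T2 I a)" using x by simp
  also have "\<dots> = (Lu M a \<cdot> (i I \<odot> al)) \<cdot> ((T0 \<odot> i (t a)) \<cdot> T2 I a)" using x by (simp add: lu_nat_r)
  also have "\<dots> = Lu M a \<cdot> ((T0 \<odot> al) \<cdot> T2 I a)" using x by (simp add: tenm_merge_c)
  finally have e: "Lu M a \<cdot> ((T0 \<odot> al) \<cdot> T2 I a) = al \<cdot> tm (Lu M a)" by simp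
  show ?thesis using e x A Ae alg_unit by (simp add: alg_hom_iff alg_lt' alg_lt lift_ten_simp)
qed

lemma alg_hom_ru: "algebra C T A \<Longrightarrow> alg_hom C T (lift_ten C M T2 A (I, T0)) A (Ru M (fst A))"
proof -
  assume A: "algebra C T A"
  obtain a al where Ae: "A = (a, al)" by (cases A)
  have x: "a \<in> Obj C" "al \<in> Arr C" "Dom C al = t a" "Cod C al = a"
    using A Ae by (simp_all add: alg_iff)
  have "al \<cdot> tm (Ru M a) = al \<cdot> (Ru M (t a) \<cdot> ((i (t a) \<odot> T0) \<cdot> T2 a I))"
    using x by (simp add: T2_ru)
  also have "\<dots> = (al \<cdot> Ru M (t a)) \<cdot> ((i (t a) \<odot> T0) \<cdot> T2 a I)" using x by simp
  also have "\<dots> = (Ru M a \<cdot> (al \<odot> i I)) \<cdot> ((i (t a) \<odot> T0) \<cdot> T2 a I)" using x by (simp add: ru_nat_r)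
  also have "\<dots> = Ru M a \<cdot> ((al \<odot> T0) \<cdot> T2 a I)" using x by (simp add: tenm_merge_c)
  finally have e: "Ru M a \<cdot> ((al \<odot> T0) \<cdot> T2 a I) = al \<cdot> tm (Ru M a)" by simp
  show ?thesis using e x A Ae alg_unit by (simp add: alg_hom_iff alg_lt' alg_lt lift_ten_simp)
qed

end



context bm_ctx
begin

abbreviation "E \<equiv> EM C T"
abbreviation "L \<equiv> lift_mon C M T2 T0"

lemma bif_EM: "bifunctor E (Ten L) (TenM L)"
  unfolding bifunctor_def
proof (intro conjI ballI impI)
  fix A B assume "A \<in> Obj E" "B \<in> Obj E"
  thus "Ten L A B \<in> Obj E" by (simp add: alg_lt')
next
  fix p q assume "p \<in> Arr E" "q \<in> Arr E"
  thus "TenM L p q \<in> hom E (Ten L (Dom E p) (Dom E q)) (Ten L (Cod E p) (Cod E q))"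
    by (simp add: in_hom_iff alg_hom_tenm)
next
  fix A B assume "A \<in> Obj E" "B \<in> Obj E"
  thus "TenM L (Idt E A) (Idt E B) = Idt E (Ten L A B)" by (simp add: algE)
next
  fix f f' g g' assume "f \<in> Arr E" "f' \<in> Arr E" "g \<in> Arr E" "g' \<in> Arr E"
    "Cod E f = Dom E f'" "Cod E g = Dom E g'"
  thus "TenM L (Cmp E f' f) (Cmp E g' g) = Cmp E (TenM L f' g') (TenM L f g)"
    by (simp add: alg_hom_iff tenm_comp)
qed

lemma monoidal_EM: "monoidal E L"
  unfolding monoidal_def
proof (intro conjI ballI)
  show "category E" by (rule cat_EM)
  show "bifunctor E (Ten L) (TenM L)" by (rule bif_EM)
  show "MUnit L \<in> Obj E" by (simp add: alg_unit)
next
  fix A B D assume "A \<in> Obj E" "B \<in> Obj E" "D \<in> Obj E"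
  hence h: "algebra C T A" "algebra C T B" "algebra C T D" by simp_all
  show "Asc L A B D \<in> hom E (Ten L (Ten L A B) D) (Ten L A (Ten L B D))"
    using h by (simp add: in_hom_iff alg_hom_asc)
  show "iso E (Asc L A B D)"
    using iso_EM[of "Asc L A B D"] h algE[OF h(1)] algE[OF h(2)] algE[OF h(3)]
    by (simp add: alg_hom_asc asc_iso)
next
  fix A assume "A \<in> Obj E"
  hence h: "algebra C T A" by simp
  show "Lu L A \<in> hom E (Ten L (MUnit L) A) A" using h by (simp add: in_hom_iff alg_hom_lu)
  show "iso E (Lu L A)" using iso_EM[of "Lu L A"] h algE[OF h] by (simp add: alg_hom_lu lu_iso)
  show "Ru L A \<in> hom E (Ten L A (MUnit L)) A" using h by (simp add: in_hom_iff alg_hom_ru)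
  show "iso E (Ru L A)" using iso_EM[of "Ru L A"] h algE[OF h] by (simp add: alg_hom_ru ru_iso)
next
  fix f g h assume "f \<in> Arr E" "g \<in> Arr E" "h \<in> Arr E"
  thus "Cmp E (Asc L (Cod E f) (Cod E g) (Cod E h)) (TenM L (TenM L f g) h) =
        Cmp E (TenM L f (TenM L g h)) (Asc L (Dom E f) (Dom E g) (Dom E h))"
    by (simp add: alg_hom_iff asc_nat)
next
  fix f assume "f \<in> Arr E"
  thus "Cmp E (Lu L (Cod E f)) (TenM L (Idt E (MUnit L)) f) = Cmp E f (Lu L (Dom E f))"
       "Cmp E (Ru L (Cod E f)) (TenM L f (Idt E (MUnit L))) = Cmp E f (Ru L (Dom E f))"
    by (simp_all add: alg_hom_iff lu_nat ru_nat)
next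
  fix w x y z assume "w \<in> Obj E" "x \<in> Obj E" "y \<in> Obj E" "z \<in> Obj E"
  thus "Cmp E (Asc L w x (Ten L y z)) (Asc L (Ten L w x) y z) =
       Cmp E (TenM L (Idt E w) (Asc L x y z)) (Cmp E (Asc L w (Ten L x y) z) (TenM L (Asc L w x y) (Idt E z)))"
    by (simp add: algE pentagon)
next
  fix x y assume "x \<in> Obj E" "y \<in> Obj E"
  thus "Cmp E (TenM L (Idt E x) (Lu L y)) (Asc L x (MUnit L) y) = TenM L (Ru L x) (Idt E y)"
    by (simp add: algE triangle)
qed

end



locale ctx =
  fixes D :: "('o,'m) cat" and M1 M2 :: "('o,'m) mon" and T :: "('o,'m) monad"
    and T2c T2b :: "'o \<Rightarrow> 'o \<Rightarrow> 'm" and T0c T0b :: 'm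
    and R :: "'o \<Rightarrow> 'o \<Rightarrow> 'o \<Rightarrow> 'o \<Rightarrow> 'm" and nu varpi iota :: 'm
  assumes pre: "preduoidal D M1 M2"
    and sep: "sep_opmonoidal_monad D M1 M2 T T2c T0c T2b T0b"
    and rm: "rmatrix D M1 M2 T T2c T0c T2b T0b R nu varpi iota"
begin

lemma bm1: "bimonad D M1 T T2c T0c" using sep unfolding sep_opmonoidal_monad_def by blast
lemma bm2: "bimonad D M2 T T2b T0b" using sep unfolding sep_opmonoidal_monad_def by blast

sublocale b1: bm_ctx D M1 T T2c T0c by (unfold_locales, rule bm1)
sublocale b2: bm_ctx D M2 T T2b T0b by (unfold_locales, rule bm2)

abbreviation cp (infixr "\<cdot>" 55) where "g \<cdot> f \<equiv> Cmp D g f"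
abbreviation t where "t \<equiv> TO T"
abbreviation tm where "tm \<equiv> TM T"
abbreviation mu where "mu \<equiv> Mu T"
abbreviation i where "i \<equiv> Idt D"
abbreviation ten1 (infixr "\<otimes>" 60) where "x \<otimes> y \<equiv> Ten M1 x y"
abbreviation tenm1 (infixr "\<odot>" 60) where "f \<odot> g \<equiv> TenM M1 f g"
abbreviation ten2 (infixr "\<oplus>" 61) where "x \<oplus> y \<equiv> Ten M2 x y"
abbreviation tenm2 (infixr "\<boxplus>" 61) where "f \<boxplus> g \<equiv> TenM M2 f g"
abbreviation "E \<equiv> EM D T"
abbreviation "L1 \<equiv> lift_mon D M1 T2c T0c"
abbreviation "L2 \<equiv> lift_mon D M2 T2b T0b"
abbreviation "ubot \<equiv> MUnit M1"
abbreviation "uone \<equiv> MUnit M2"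

lemmas RM = rm[unfolded rmatrix_def Let_def]
lemmas RM1 = RM[THEN conjunct1]
lemmas RM2 = RM[THEN conjunct2, THEN conjunct1]
lemmas RM3 = RM[THEN conjunct2, THEN conjunct2, THEN conjunct1]
lemmas RM4 = RM[THEN conjunct2, THEN conjunct2, THEN conjunct2, THEN conjunct1]
lemmas RM5 = RM[THEN conjunct2, THEN conjunct2, THEN conjunct2, THEN conjunct2, THEN conjunct1]
lemmas RM6 = RM[THEN conjunct2, THEN conjunct2, THEN conjunct2, THEN conjunct2, THEN conjunct2, THEN conjunct1]
lemmas RM7 = RM[THEN conjunct2, THEN conjunct2, THEN conjunct2, THEN conjunct2, THEN conjunct2, THEN conjunct2, THEN conjunct1]
lemmas RM8 = RM[THEN conjunct2, THEN conjunct2, THEN conjunct2, THEN conjunct2, THEN conjunct2, THEN conjunct2, THEN conjunct2]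

lemma R_arr[simp]: "a \<in> Obj D \<Longrightarrow> b \<in> Obj D \<Longrightarrow> c \<in> Obj D \<Longrightarrow> d \<in> Obj D \<Longrightarrow> R a b c d \<in> Arr D"
  using RM1 unfolding in_hom_iff by blast
lemma R_dom[simp]: "a \<in> Obj D \<Longrightarrow> b \<in> Obj D \<Longrightarrow> c \<in> Obj D \<Longrightarrow> d \<in> Obj D \<Longrightarrow> Dom D (R a b c d) = (a \<oplus> b) \<otimes> (c \<oplus> d)"
  using RM1 unfolding in_hom_iff by blast
lemma R_cod[simp]: "a \<in> Obj D \<Longrightarrow> b \<in> Obj D \<Longrightarrow> c \<in> Obj D \<Longrightarrow> d \<in> Obj D \<Longrightarrow> Cod D (R a b c d) = (t a \<otimes> t c) \<oplus> (t b \<otimes> t d)"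
  using RM1 unfolding in_hom_iff by blast
lemma R_nat: "f \<in> Arr D \<Longrightarrow> g \<in> Arr D \<Longrightarrow> h \<in> Arr D \<Longrightarrow> k \<in> Arr D \<Longrightarrow>
   Cod D f = a \<Longrightarrow> Cod D g = b \<Longrightarrow> Cod D h = c \<Longrightarrow> Cod D k = d \<Longrightarrow>
   R a b c d \<cdot> ((f \<boxplus> g) \<odot> (h \<boxplus> k)) = ((tm f \<odot> tm h) \<boxplus> (tm g \<odot> tm k)) \<cdot> R (Dom D f) (Dom D g) (Dom D h) (Dom D k)"
  using RM2 by blast

lemma comon: "comonoid_obj E L2 (MUnit L1) (MUnit L1, Ten L2 (MUnit L1) (MUnit L1), nu) (MUnit L1, MUnit L2, iota)"
  by (rule RM3)
lemma mon1: "monoid_obj E L1 (MUnit L2) (Ten L1 (MUnit L2) (MUnit L2), MUnit L2, varpi) (MUnit L1, MUnit L2, iota)"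
  by (rule RM4)

lemma nu_typ[simp]: "nu \<in> Arr D" "Dom D nu = ubot" "Cod D nu = ubot \<oplus> ubot"
  using comon unfolding comonoid_obj_def in_hom_iff by (simp_all add: b1.alg_hom_iff)
lemma varpi_typ[simp]: "varpi \<in> Arr D" "Dom D varpi = uone \<otimes> uone" "Cod D varpi = uone"
  using mon1 unfolding monoid_obj_def in_hom_iff by (simp_all add: b1.alg_hom_iff)

end



context ctx
begin

abbreviation "lt1 \<equiv> lift_ten D M1 T2c"
abbreviation "lt2 \<equiv> lift_ten D M2 T2b"
abbreviation "XI \<equiv> xi D M1 M2 T2c T0c T2b T0b R"

lemma xi_simp: "XI A B A' B' = (lt1 (lt2 A B) (lt2 A' B'), lt2 (lt1 A A') (lt1 B B'),
   ((snd A \<odot> snd A') \<boxplus> (snd B \<odot> snd B')) \<cdot> R (fst A) (fst B) (fst A') (fst B'))"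
  by (simp add: xi_def Let_def)

lemma algx: "algebra D T (a, al) \<Longrightarrow> a \<in> Obj D \<and> al \<in> Arr D \<and> Dom D al = t a \<and> Cod D al = a \<and> al \<cdot> tm al = al \<cdot> mu a"
  by (simp add: b1.alg_iff)

lemmas Rlift = RM6[rule_format]

lemma xi_alg: "algebra D T (a, al) \<Longrightarrow> algebra D T (b, be) \<Longrightarrow> algebra D T (c, ga) \<Longrightarrow> algebra D T (d, de) \<Longrightarrow>
  alg_hom D T (lt1 (lt2 (a,al) (b,be)) (lt2 (c,ga) (d,de))) (lt2 (lt1 (a,al) (c,ga)) (lt1 (b,be) (d,de)))
    (((al \<odot> ga) \<boxplus> (be \<odot> de)) \<cdot> R a b c d)"
proof -
  assume A: "algebra D T (a, al)" and B: "algebra D T (b, be)" and C: "algebra D T (c, ga)" and DD: "algebra D T (d, de)"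
  note x = algx[OF A] algx[OF B] algx[OF C] algx[OF DD]
  let ?X = "(al \<odot> ga) \<boxplus> (be \<odot> de)"
  have "(?X \<cdot> R a b c d) \<cdot> ((((al \<boxplus> be) \<cdot> T2b a b) \<odot> ((ga \<boxplus> de) \<cdot> T2b c d)) \<cdot> T2c (a \<oplus> b) (c \<oplus> d))
     = ?X \<cdot> ((R a b c d \<cdot> ((al \<boxplus> be) \<odot> (ga \<boxplus> de))) \<cdot> ((T2b a b \<odot> T2b c d) \<cdot> T2c (a \<oplus> b) (c \<oplus> d)))"
    using x by (simp add: b1.tenm_merge b1.tenm_merge_c)
  also have "\<dots> = ?X \<cdot> ((((tm al \<odot> tm ga) \<boxplus> (tm be \<odot> tm de)) \<cdot> R (t a) (t b) (t c) (t d)) \<cdot> ((T2b a b \<odot> T2b c d) \<cdot> T2c (a \<oplus> b) (c \<oplus> d)))"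
    using x by (simp add: R_nat)
  also have "\<dots> = ?X \<cdot> (((mu a \<odot> mu c) \<boxplus> (mu b \<odot> mu d)) \<cdot> (R (t a) (t b) (t c) (t d) \<cdot> ((T2b a b \<odot> T2b c d) \<cdot> T2c (a \<oplus> b) (c \<oplus> d))))"
    using x by (simp add: b1.tenm_merge b1.tenm_merge_c b2.tenm_merge b2.tenm_merge_c)
  also have "\<dots> = ?X \<cdot> (((mu a \<odot> mu c) \<boxplus> (mu b \<odot> mu d)) \<cdot> ((T2c (t a) (t c) \<boxplus> T2c (t b) (t d)) \<cdot> (T2b (t a \<otimes> t c) (t b \<otimes> t d) \<cdot> tm (R a b c d))))"
    using x by (simp add: Rlift)
  also have "\<dots> = (((al \<odot> ga) \<cdot> T2c a c) \<boxplus> ((be \<odot> de) \<cdot> T2c b d)) \<cdot> ((tm (al \<odot> ga) \<boxplus> tm (be \<odot> de)) \<cdot> (T2b (t a \<otimes> t c) (t b \<otimes> t d) \<cdot> tm (R a b c d)))"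
    using x by (simp add: b1.tenm_merge b1.tenm_merge_c b2.tenm_merge b2.tenm_merge_c b1.T2_nat)
  also have "\<dots> = ((((al \<odot> ga) \<cdot> T2c a c) \<boxplus> ((be \<odot> de) \<cdot> T2c b d)) \<cdot> T2b (a \<otimes> c) (b \<otimes> d)) \<cdot> tm (?X \<cdot> R a b c d)"
    using x by (simp add: b2.T2_nat_c b1.tm_comp)
  finally have e: "(?X \<cdot> R a b c d) \<cdot> ((((al \<boxplus> be) \<cdot> T2b a b) \<odot> ((ga \<boxplus> de) \<cdot> T2b c d)) \<cdot> T2c (a \<oplus> b) (c \<oplus> d))
     = ((((al \<odot> ga) \<cdot> T2c a c) \<boxplus> ((be \<odot> de) \<cdot> T2c b d)) \<cdot> T2b (a \<otimes> c) (b \<otimes> d)) \<cdot> tm (?X \<cdot> R a b c d)" .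
  show ?thesis using e x A B C DD
    by (simp add: b1.alg_hom_iff b1.lift_ten_simp b2.lift_ten_simp b1.alg_lt b2.alg_lt)
qed

end



context ctx
begin

lemma K1: "algebra D T (x, ch) \<Longrightarrow> algebra D T (a, al) \<Longrightarrow>
   (ch \<odot> al) \<cdot> (T2c x a \<cdot> tm (ch \<odot> al)) = (ch \<odot> al) \<cdot> ((mu x \<odot> mu a) \<cdot> T2c (t x) (t a))"
proof -
  assume X: "algebra D T (x, ch)" and A: "algebra D T (a, al)"
  note h = algx[OF X] algx[OF A]
  show ?thesis using h by (simp add: b1.T2_nat b1.tenm_merge_c)
qed

lemma K2: "algebra D T (x, ch) \<Longrightarrow> algebra D T (a, al) \<Longrightarrow>
   (ch \<boxplus> al) \<cdot> (T2b x a \<cdot> tm (ch \<boxplus> al)) = (ch \<boxplus> al) \<cdot> ((mu x \<boxplus> mu a) \<cdot> T2b (t x) (t a))"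
proof -
  assume X: "algebra D T (x, ch)" and A: "algebra D T (a, al)"
  note h = algx[OF X] algx[OF A]
  show ?thesis using h by (simp add: b2.T2_nat b2.tenm_merge_c)
qed

lemmas R1 = RM7[rule_format]

lemma A1_3:
  assumes X: "algebra D T (x, ch)" and Y: "algebra D T (y, ps)" and A: "algebra D T (a, al)"
    and B: "algebra D T (b, be)" and C: "algebra D T (c, ga)" and DD: "algebra D T (d, de)"
  shows "(Asc M1 x a c \<boxplus> Asc M1 y b d) \<cdot>
      ((((((ch \<odot> al) \<cdot> T2c x a) \<odot> ga) \<boxplus> (((ps \<odot> be) \<cdot> T2c y b) \<odot> de)) \<cdot> R (x \<otimes> a) (y \<otimes> b) c d) \<cdot>
        ((((ch \<odot> al) \<boxplus> (ps \<odot> be)) \<cdot> R x y a b) \<odot> i (c \<oplus> d)))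
   = (((ch \<odot> ((al \<odot> ga) \<cdot> T2c a c)) \<boxplus> (ps \<odot> ((be \<odot> de) \<cdot> T2c b d))) \<cdot> R x y (a \<otimes> c) (b \<otimes> d)) \<cdot>
      ((i (x \<oplus> y) \<odot> (((al \<odot> ga) \<boxplus> (be \<odot> de)) \<cdot> R a b c d)) \<cdot> Asc M1 (x \<oplus> y) (a \<oplus> b) (c \<oplus> d))"
proof -
  note h = algx[OF X] algx[OF Y] algx[OF A] algx[OF B] algx[OF C] algx[OF DD]
  let ?As = "Asc M1 x a c \<boxplus> Asc M1 y b d"
  let ?G2 = "(((ch \<odot> al) \<cdot> T2c x a) \<odot> ga) \<boxplus> (((ps \<odot> be) \<cdot> T2c y b) \<odot> de)"
  let ?F = "(ch \<odot> al) \<boxplus> (ps \<odot> be)"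
  let ?P = "(ch \<odot> (al \<odot> ga)) \<boxplus> (ps \<odot> (be \<odot> de))"
  let ?R' = "R (t x \<otimes> t a) (t y \<otimes> t b) c d"
  let ?LR = "(Asc M1 (t x) (t a) (t c) \<boxplus> Asc M1 (t y) (t b) (t d)) \<cdot>
     ((((mu x \<odot> mu a) \<odot> i (t c)) \<boxplus> ((mu y \<odot> mu b) \<odot> i (t d))) \<cdot>
      (((T2c (t x) (t a) \<odot> i (t c)) \<boxplus> (T2c (t y) (t b) \<odot> i (t d))) \<cdot>
       (R (t x \<otimes> t a) (t y \<otimes> t b) c d \<cdot> (R x y a b \<odot> i (c \<oplus> d)))))"
  let ?RR = "((i (t x) \<odot> (mu a \<odot> mu c)) \<boxplus> (i (t y) \<odot> (mu b \<odot> mu d))) \<cdot>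
     (((i (t x) \<odot> T2c (t a) (t c)) \<boxplus> (i (t y) \<odot> T2c (t b) (t d))) \<cdot>
      (R x y (t a \<otimes> t c) (t b \<otimes> t d) \<cdot> ((i (x \<oplus> y) \<odot> R a b c d) \<cdot> Asc M1 (x \<oplus> y) (a \<oplus> b) (c \<oplus> d))))"
  have R1i: "?LR = ?RR" using R1[of x y a b c d] h by simp
  have AN: "?As \<cdot> (((ch \<odot> al) \<odot> ga) \<boxplus> ((ps \<odot> be) \<odot> de)) =
      ?P \<cdot> (Asc M1 (t x) (t a) (t c) \<boxplus> Asc M1 (t y) (t b) (t d))"
    using h by (simp add: b2.tenm_merge b1.asc_nat)
  have "?As \<cdot> ((?G2 \<cdot> R (x \<otimes> a) (y \<otimes> b) c d) \<cdot> ((?F \<cdot> R x y a b) \<odot> i (c \<oplus> d)))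
     = ?As \<cdot> (?G2 \<cdot> ((R (x \<otimes> a) (y \<otimes> b) c d \<cdot> (?F \<odot> (i c \<boxplus> i d))) \<cdot> (R x y a b \<odot> i (c \<oplus> d))))"
    using h by (simp add: b1.tenm_merge b1.tenm_merge_c)
  also have "\<dots> = ?As \<cdot> (?G2 \<cdot> ((((tm (ch \<odot> al) \<odot> i (t c)) \<boxplus> (tm (ps \<odot> be) \<odot> i (t d))) \<cdot> ?R') \<cdot> (R x y a b \<odot> i (c \<oplus> d))))"
    using h by (simp del: b2.tenm_id add: R_nat)
  also have "\<dots> = ?As \<cdot> ((((((ch \<odot> al) \<cdot> T2c x a) \<cdot> tm (ch \<odot> al)) \<odot> ga) \<boxplus> ((((ps \<odot> be) \<cdot> T2c y b) \<cdot> tm (ps \<odot> be)) \<odot> de))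
        \<cdot> (?R' \<cdot> (R x y a b \<odot> i (c \<oplus> d))))"
    using h by (simp add: b1.tenm_merge b2.tenm_merge_c)
  also have "\<dots> = ?As \<cdot> (((((ch \<odot> al) \<cdot> ((mu x \<odot> mu a) \<cdot> T2c (t x) (t a))) \<odot> ga) \<boxplus> (((ps \<odot> be) \<cdot> ((mu y \<odot> mu b) \<cdot> T2c (t y) (t b))) \<odot> de))
        \<cdot> (?R' \<cdot> (R x y a b \<odot> i (c \<oplus> d))))"
    using h by (simp add: K1[OF X A] K1[OF Y B])
  also have "\<dots> = (?As \<cdot> (((ch \<odot> al) \<odot> ga) \<boxplus> ((ps \<odot> be) \<odot> de))) \<cdot>
     ((((mu x \<odot> mu a) \<odot> i (t c)) \<boxplus> ((mu y \<odot> mu b) \<odot> i (t d))) \<cdot>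
      (((T2c (t x) (t a) \<odot> i (t c)) \<boxplus> (T2c (t y) (t b) \<odot> i (t d))) \<cdot>
       (?R' \<cdot> (R x y a b \<odot> i (c \<oplus> d)))))"
    using h by (simp add: b1.tenm_merge b1.tenm_merge_c b2.tenm_merge b2.tenm_merge_c)
  also have "\<dots> = (?P \<cdot> (Asc M1 (t x) (t a) (t c) \<boxplus> Asc M1 (t y) (t b) (t d))) \<cdot>
     ((((mu x \<odot> mu a) \<odot> i (t c)) \<boxplus> ((mu y \<odot> mu b) \<odot> i (t d))) \<cdot>
      (((T2c (t x) (t a) \<odot> i (t c)) \<boxplus> (T2c (t y) (t b) \<odot> i (t d))) \<cdot>
       (?R' \<cdot> (R x y a b \<odot> i (c \<oplus> d)))))"
    by (simp only: AN)
  also have "\<dots> = ?P \<cdot> ?LR" using h by simp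
  also have "\<dots> = ?P \<cdot> ?RR" by (simp only: R1i)
  finally have L: "?As \<cdot> ((?G2 \<cdot> R (x \<otimes> a) (y \<otimes> b) c d) \<cdot> ((?F \<cdot> R x y a b) \<odot> i (c \<oplus> d))) = ?P \<cdot> ?RR" .
  let ?H = "(ch \<odot> ((al \<odot> ga) \<cdot> T2c a c)) \<boxplus> (ps \<odot> ((be \<odot> de) \<cdot> T2c b d))"
  let ?G = "(al \<odot> ga) \<boxplus> (be \<odot> de)"
  let ?As2 = "Asc M1 (x \<oplus> y) (a \<oplus> b) (c \<oplus> d)"
  let ?R2 = "R x y (t a \<otimes> t c) (t b \<otimes> t d)"
  have "(?H \<cdot> R x y (a \<otimes> c) (b \<otimes> d)) \<cdot> ((i (x \<oplus> y) \<odot> (?G \<cdot> R a b c d)) \<cdot> ?As2)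
      = ?H \<cdot> ((R x y (a \<otimes> c) (b \<otimes> d) \<cdot> ((i x \<boxplus> i y) \<odot> ?G)) \<cdot> ((i (x \<oplus> y) \<odot> R a b c d) \<cdot> ?As2))"
    using h by (simp add: b1.tenm_merge b1.tenm_merge_c)
  also have "\<dots> = ?H \<cdot> ((((i (t x) \<odot> tm (al \<odot> ga)) \<boxplus> (i (t y) \<odot> tm (be \<odot> de))) \<cdot> ?R2) \<cdot> ((i (x \<oplus> y) \<odot> R a b c d) \<cdot> ?As2))"
    using h by (simp del: b2.tenm_id add: R_nat)
  also have "\<dots> = ((ch \<odot> (((al \<odot> ga) \<cdot> T2c a c) \<cdot> tm (al \<odot> ga))) \<boxplus> (ps \<odot> (((be \<odot> de) \<cdot> T2c b d) \<cdot> tm (be \<odot> de))))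
       \<cdot> (?R2 \<cdot> ((i (x \<oplus> y) \<odot> R a b c d) \<cdot> ?As2))"
    using h by (simp add: b1.tenm_merge b2.tenm_merge_c)
  also have "\<dots> = ((ch \<odot> ((al \<odot> ga) \<cdot> ((mu a \<odot> mu c) \<cdot> T2c (t a) (t c)))) \<boxplus> (ps \<odot> ((be \<odot> de) \<cdot> ((mu b \<odot> mu d) \<cdot> T2c (t b) (t d)))))
       \<cdot> (?R2 \<cdot> ((i (x \<oplus> y) \<odot> R a b c d) \<cdot> ?As2))"
    using h by (simp add: K1[OF A C] K1[OF B DD])
  also have "\<dots> = ?P \<cdot> ?RR"
    using h by (simp add: b1.tenm_merge b1.tenm_merge_c b2.tenm_merge b2.tenm_merge_c)
  finally have RR: "(?H \<cdot> R x y (a \<otimes> c) (b \<otimes> d)) \<cdot> ((i (x \<oplus> y) \<odot> (?G \<cdot> R a b c d)) \<cdot> ?As2) = ?P \<cdot> ?RR" .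
  show ?thesis using L RR by simp
qed

end



context ctx
begin

lemmas R2 = RM8[rule_format]

lemma A2_3:
  assumes X: "algebra D T (x, ch)" and Y: "algebra D T (y, ps)" and A: "algebra D T (a, al)"
    and B: "algebra D T (b, be)" and C: "algebra D T (c, ga)" and DD: "algebra D T (d, de)"
  shows "Asc M2 (x \<otimes> y) (a \<otimes> b) (c \<otimes> d) \<cdot>
     (((((ch \<odot> ps) \<boxplus> (al \<odot> be)) \<cdot> R x a y b) \<boxplus> i (c \<otimes> d)) \<cdot>
      (((((ch \<boxplus> al) \<cdot> T2b x a) \<odot> ((ps \<boxplus> be) \<cdot> T2b y b)) \<boxplus> (ga \<odot> de)) \<cdot> R (x \<oplus> a) c (y \<oplus> b) d))
   = (i (x \<otimes> y) \<boxplus> (((al \<odot> be) \<boxplus> (ga \<odot> de)) \<cdot> R a c b d)) \<cdot>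
     ((((ch \<odot> ps) \<boxplus> (((al \<boxplus> ga) \<cdot> T2b a c) \<odot> ((be \<boxplus> de) \<cdot> T2b b d))) \<cdot> R x (a \<oplus> c) y (b \<oplus> d)) \<cdot>
      (Asc M2 x a c \<odot> Asc M2 y b d))"
proof -
  note h = algx[OF X] algx[OF Y] algx[OF A] algx[OF B] algx[OF C] algx[OF DD]
  let ?As = "Asc M2 (x \<otimes> y) (a \<otimes> b) (c \<otimes> d)"
  let ?F = "(ch \<odot> ps) \<boxplus> (al \<odot> be)"
  let ?Q = "(ch \<odot> ps) \<boxplus> ((al \<odot> be) \<boxplus> (ga \<odot> de))"
  let ?R'' = "R (x \<oplus> a) c (y \<oplus> b) d"
  let ?LR = "Asc M2 (t x \<otimes> t y) (t a \<otimes> t b) (t c \<otimes> t d) \<cdot>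
     ((((mu x \<odot> mu y) \<boxplus> (mu a \<odot> mu b)) \<boxplus> i (t c \<otimes> t d)) \<cdot>
      ((R (t x) (t a) (t y) (t b) \<boxplus> i (t c \<otimes> t d)) \<cdot>
       (((T2b x a \<odot> T2b y b) \<boxplus> i (t c \<otimes> t d)) \<cdot> R (x \<oplus> a) c (y \<oplus> b) d)))"
  let ?RR = "(i (t x \<otimes> t y) \<boxplus> ((mu a \<odot> mu b) \<boxplus> (mu c \<odot> mu d))) \<cdot>
     ((i (t x \<otimes> t y) \<boxplus> R (t a) (t c) (t b) (t d)) \<cdot>
      ((i (t x \<otimes> t y) \<boxplus> (T2b a c \<odot> T2b b d)) \<cdot>
       (R x (a \<oplus> c) y (b \<oplus> d) \<cdot> (Asc M2 x a c \<odot> Asc M2 y b d))))"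
  have R2i: "?LR = ?RR" using R2[of x a y b c d] h by simp
  have AN: "?As \<cdot> (((ch \<odot> ps) \<boxplus> (al \<odot> be)) \<boxplus> (ga \<odot> de)) =
      ?Q \<cdot> Asc M2 (t x \<otimes> t y) (t a \<otimes> t b) (t c \<otimes> t d)"
    using h by (simp add: b2.asc_nat)
  have "?As \<cdot> (((?F \<cdot> R x a y b) \<boxplus> i (c \<otimes> d)) \<cdot>
      (((((ch \<boxplus> al) \<cdot> T2b x a) \<odot> ((ps \<boxplus> be) \<cdot> T2b y b)) \<boxplus> (ga \<odot> de)) \<cdot> ?R''))
    = ?As \<cdot> (((?F \<cdot> (R x a y b \<cdot> ((ch \<boxplus> al) \<odot> (ps \<boxplus> be)))) \<boxplus> (ga \<odot> de)) \<cdot>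
      (((T2b x a \<odot> T2b y b) \<boxplus> i (t c \<otimes> t d)) \<cdot> ?R''))"
    using h by (simp add: b1.tenm_merge b1.tenm_merge_c b2.tenm_merge b2.tenm_merge_c)
  also have "\<dots> = ?As \<cdot> (((?F \<cdot> (((tm ch \<odot> tm ps) \<boxplus> (tm al \<odot> tm be)) \<cdot> R (t x) (t a) (t y) (t b))) \<boxplus> (ga \<odot> de)) \<cdot>
      (((T2b x a \<odot> T2b y b) \<boxplus> i (t c \<otimes> t d)) \<cdot> ?R''))"
    using h by (simp add: R_nat)
  also have "\<dots> = (?As \<cdot> (?F \<boxplus> (ga \<odot> de))) \<cdot>
     ((((mu x \<odot> mu y) \<boxplus> (mu a \<odot> mu b)) \<boxplus> i (t c \<otimes> t d)) \<cdot>
      ((R (t x) (t a) (t y) (t b) \<boxplus> i (t c \<otimes> t d)) \<cdot>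
       (((T2b x a \<odot> T2b y b) \<boxplus> i (t c \<otimes> t d)) \<cdot> ?R'')))"
    using h by (simp add: b1.tenm_merge b1.tenm_merge_c b2.tenm_merge b2.tenm_merge_c)
  also have "\<dots> = (?Q \<cdot> Asc M2 (t x \<otimes> t y) (t a \<otimes> t b) (t c \<otimes> t d)) \<cdot>
     ((((mu x \<odot> mu y) \<boxplus> (mu a \<odot> mu b)) \<boxplus> i (t c \<otimes> t d)) \<cdot>
      ((R (t x) (t a) (t y) (t b) \<boxplus> i (t c \<otimes> t d)) \<cdot>
       (((T2b x a \<odot> T2b y b) \<boxplus> i (t c \<otimes> t d)) \<cdot> ?R'')))"
    by (simp only: AN)
  also have "\<dots> = ?Q \<cdot> ?LR" using h by simp
  also have "\<dots> = ?Q \<cdot> ?RR" by (simp only: R2i)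
  finally have L: "?As \<cdot> (((?F \<cdot> R x a y b) \<boxplus> i (c \<otimes> d)) \<cdot>
      (((((ch \<boxplus> al) \<cdot> T2b x a) \<odot> ((ps \<boxplus> be) \<cdot> T2b y b)) \<boxplus> (ga \<odot> de)) \<cdot> ?R'')) = ?Q \<cdot> ?RR" .
  let ?G = "(al \<odot> be) \<boxplus> (ga \<odot> de)"
  let ?H = "(ch \<odot> ps) \<boxplus> (((al \<boxplus> ga) \<cdot> T2b a c) \<odot> ((be \<boxplus> de) \<cdot> T2b b d))"
  let ?Rx = "R x (a \<oplus> c) y (b \<oplus> d)"
  let ?AA = "Asc M2 x a c \<odot> Asc M2 y b d"
  have "(i (x \<otimes> y) \<boxplus> (?G \<cdot> R a c b d)) \<cdot> ((?H \<cdot> ?Rx) \<cdot> ?AA)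
      = ((ch \<odot> ps) \<boxplus> ((?G \<cdot> (R a c b d \<cdot> ((al \<boxplus> ga) \<odot> (be \<boxplus> de)))) \<cdot> (T2b a c \<odot> T2b b d))) \<cdot> (?Rx \<cdot> ?AA)"
    using h by (simp add: b1.tenm_merge b1.tenm_merge_c b2.tenm_merge b2.tenm_merge_c)
  also have "\<dots> = ((ch \<odot> ps) \<boxplus> ((?G \<cdot> (((tm al \<odot> tm be) \<boxplus> (tm ga \<odot> tm de)) \<cdot> R (t a) (t c) (t b) (t d))) \<cdot> (T2b a c \<odot> T2b b d))) \<cdot> (?Rx \<cdot> ?AA)"
    using h by (simp add: R_nat)
  also have "\<dots> = ?Q \<cdot> ?RR"
    using h by (simp add: b1.tenm_merge b1.tenm_merge_c b2.tenm_merge b2.tenm_merge_c)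
  finally have RR: "(i (x \<otimes> y) \<boxplus> (?G \<cdot> R a c b d)) \<cdot> ((?H \<cdot> ?Rx) \<cdot> ?AA) = ?Q \<cdot> ?RR" .
  show ?thesis using L RR by simp
qed

end



context ctx
begin

lemma cinv_Lu1: "algebra D T A \<Longrightarrow> cinv E (Lu L1 A) = (A, lt1 (ubot, T0c) A, cinv D (Lu M1 (fst A)))"
  using b1.iso_EM[of "Lu L1 A"] b1.alg_hom_lu[of A] b1.lu_iso b1.algE[of A] by simp
lemma cinv_Ru1: "algebra D T A \<Longrightarrow> cinv E (Ru L1 A) = (A, lt1 A (ubot, T0c), cinv D (Ru M1 (fst A)))"
  using b1.iso_EM[of "Ru L1 A"] b1.alg_hom_ru[of A] b1.ru_iso b1.algE[of A] by simp
lemma cinv_Lu2: "algebra D T A \<Longrightarrow> cinv E (Lu L2 A) = (A, lt2 (uone, T0b) A, cinv D (Lu M2 (fst A)))"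
  using b2.iso_EM[of "Lu L2 A"] b2.alg_hom_lu[of A] b2.lu_iso b2.algE[of A] by simp
lemma cinv_Ru2: "algebra D T A \<Longrightarrow> cinv E (Ru L2 A) = (A, lt2 A (uone, T0b), cinv D (Ru M2 (fst A)))"
  using b2.iso_EM[of "Ru L2 A"] b2.alg_hom_ru[of A] b2.ru_iso b2.algE[of A] by simp

lemma nat_3: "alg_hom D T A A' f \<Longrightarrow> alg_hom D T B B' g \<Longrightarrow> alg_hom D T C C' h \<Longrightarrow> alg_hom D T Q Q' k \<Longrightarrow>
  (((snd A' \<odot> snd C') \<boxplus> (snd B' \<odot> snd Q')) \<cdot> R (fst A') (fst B') (fst C') (fst Q')) \<cdot> ((f \<boxplus> g) \<odot> (h \<boxplus> k))
  = ((f \<odot> h) \<boxplus> (g \<odot> k)) \<cdot> (((snd A \<odot> snd C) \<boxplus> (snd B \<odot> snd Q)) \<cdot> R (fst A) (fst B) (fst C) (fst Q))"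
  using b1.algE[of A] b1.algE[of A'] b1.algE[of B] b1.algE[of B'] b1.algE[of C] b1.algE[of C']
    b1.algE[of Q] b1.algE[of Q']
  by (simp add: b1.alg_hom_iff R_nat b1.tenm_merge b1.tenm_merge_c b2.tenm_merge b2.tenm_merge_c)

lemmas RU = RM5[rule_format]

lemma xi_hom_E: "X \<in> Obj E \<Longrightarrow> Y \<in> Obj E \<Longrightarrow> A \<in> Obj E \<Longrightarrow> B \<in> Obj E \<Longrightarrow>
  XI X Y A B \<in> hom E (Ten L1 (Ten L2 X Y) (Ten L2 A B)) (Ten L2 (Ten L1 X A) (Ten L1 Y B))"
  by (cases X, cases Y, cases A, cases B) (simp add: in_hom_iff xi_simp xi_alg)

lemma nat_E: "f \<in> Arr E \<Longrightarrow> g \<in> Arr E \<Longrightarrow> h \<in> Arr E \<Longrightarrow> k \<in> Arr E \<Longrightarrow>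
  Cmp E (XI (Cod E f) (Cod E g) (Cod E h) (Cod E k)) (TenM L1 (TenM L2 f g) (TenM L2 h k))
  = Cmp E (TenM L2 (TenM L1 f h) (TenM L1 g k)) (XI (Dom E f) (Dom E g) (Dom E h) (Dom E k))"
  using nat_3[of "fst f" "fst (snd f)" "snd (snd f)" "fst g" "fst (snd g)" "snd (snd g)"
     "fst h" "fst (snd h)" "snd (snd h)" "fst k" "fst (snd k)" "snd (snd k)"]
  by (simp add: xi_simp)

lemma A1_E: "x \<in> Obj E \<Longrightarrow> y \<in> Obj E \<Longrightarrow> a \<in> Obj E \<Longrightarrow> b \<in> Obj E \<Longrightarrow> c \<in> Obj E \<Longrightarrow> d \<in> Obj E \<Longrightarrow>
  Cmp E (TenM L2 (Asc L1 x a c) (Asc L1 y b d)) (Cmp E (XI (Ten L1 x a) (Ten L1 y b) c d) (TenM L1 (XI x y a b) (Idt E (Ten L2 c d))))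
  = Cmp E (XI x y (Ten L1 a c) (Ten L1 b d)) (Cmp E (TenM L1 (Idt E (Ten L2 x y)) (XI a b c d)) (Asc L1 (Ten L2 x y) (Ten L2 a b) (Ten L2 c d)))"
proof -
  assume h: "x \<in> Obj E" "y \<in> Obj E" "a \<in> Obj E" "b \<in> Obj E" "c \<in> Obj E" "d \<in> Obj E"
  obtain x0 ch where X: "x = (x0, ch)" by (cases x)
  obtain y0 ps where Y: "y = (y0, ps)" by (cases y)
  obtain a0 al where A: "a = (a0, al)" by (cases a)
  obtain b0 be where B: "b = (b0, be)" by (cases b)
  obtain c0 ga where C: "c = (c0, ga)" by (cases c)
  obtain d0 de where DD: "d = (d0, de)" by (cases d)
  have al: "algebra D T (x0, ch)" "algebra D T (y0, ps)" "algebra D T (a0, al)" "algebra D T (b0, be)"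
    "algebra D T (c0, ga)" "algebra D T (d0, de)" using h X Y A B C DD by simp_all
  show ?thesis using A1_3[OF al] X Y A B C DD by (simp add: xi_simp)
qed

lemma A2_E: "x \<in> Obj E \<Longrightarrow> y \<in> Obj E \<Longrightarrow> a \<in> Obj E \<Longrightarrow> b \<in> Obj E \<Longrightarrow> c \<in> Obj E \<Longrightarrow> d \<in> Obj E \<Longrightarrow>
  Cmp E (Asc L2 (Ten L1 x y) (Ten L1 a b) (Ten L1 c d)) (Cmp E (TenM L2 (XI x a y b) (Idt E (Ten L1 c d))) (XI (Ten L2 x a) c (Ten L2 y b) d))
  = Cmp E (TenM L2 (Idt E (Ten L1 x y)) (XI a c b d)) (Cmp E (XI x (Ten L2 a c) y (Ten L2 b d)) (TenM L1 (Asc L2 x a c) (Asc L2 y b d)))"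
proof -
  assume h: "x \<in> Obj E" "y \<in> Obj E" "a \<in> Obj E" "b \<in> Obj E" "c \<in> Obj E" "d \<in> Obj E"
  obtain x0 ch where X: "x = (x0, ch)" by (cases x)
  obtain y0 ps where Y: "y = (y0, ps)" by (cases y)
  obtain a0 al where A: "a = (a0, al)" by (cases a)
  obtain b0 be where B: "b = (b0, be)" by (cases b)
  obtain c0 ga where C: "c = (c0, ga)" by (cases c)
  obtain d0 de where DD: "d = (d0, de)" by (cases d)
  have al: "algebra D T (x0, ch)" "algebra D T (y0, ps)" "algebra D T (a0, al)" "algebra D T (b0, be)"
    "algebra D T (c0, ga)" "algebra D T (d0, de)" using h X Y A B C DD by simp_all
  show ?thesis using A2_3[OF al] X Y A B C DD by (simp add: xi_simp)
qed

lemma U_E: "a \<in> Obj E \<Longrightarrow> b \<in> Obj E \<Longrightarrow>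
  Cmp E (XI (MUnit L1) (MUnit L1) a b) (TenM L1 (MUnit L1, Ten L2 (MUnit L1) (MUnit L1), nu) (Idt E (Ten L2 a b)))
    = Cmp E (TenM L2 (cinv E (Lu L1 a)) (cinv E (Lu L1 b))) (Lu L1 (Ten L2 a b)) \<and>
  Cmp E (XI a b (MUnit L1) (MUnit L1)) (TenM L1 (Idt E (Ten L2 a b)) (MUnit L1, Ten L2 (MUnit L1) (MUnit L1), nu))
    = Cmp E (TenM L2 (cinv E (Ru L1 a)) (cinv E (Ru L1 b))) (Ru L1 (Ten L2 a b)) \<and>
  Cmp E (TenM L2 (Ten L1 (MUnit L2) (MUnit L2), MUnit L2, varpi) (Idt E (Ten L1 a b))) (XI (MUnit L2) a (MUnit L2) b)
    = Cmp E (cinv E (Lu L2 (Ten L1 a b))) (TenM L1 (Lu L2 a) (Lu L2 b)) \<and>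
  Cmp E (TenM L2 (Idt E (Ten L1 a b)) (Ten L1 (MUnit L2) (MUnit L2), MUnit L2, varpi)) (XI a (MUnit L2) b (MUnit L2))
    = Cmp E (cinv E (Ru L2 (Ten L1 a b))) (TenM L1 (Ru L2 a) (Ru L2 b))"
proof -
  assume h: "a \<in> Obj E" "b \<in> Obj E"
  hence ha: "algebra D T a" "algebra D T b" by simp_all
  have hab: "algebra D T (lt1 a b)" "algebra D T (lt2 a b)" using ha by (simp_all add: b1.alg_lt' b2.alg_lt')
  note ru = RU[OF h]
  show ?thesis using ru ha hab b1.algE[OF ha(1)] b1.algE[OF ha(2)]
    by (simp add: xi_simp cinv_Lu1[simplified] cinv_Ru1[simplified] cinv_Lu2[OF hab(1), simplified] cinv_Ru2[OF hab(1), simplified] b1.lu_iso b1.ru_iso b2.lu_iso b2.ru_iso)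
qed

theorem duo: "duoidal E L1 L2 XI
           (MUnit L1, Ten L2 (MUnit L1) (MUnit L1), nu)
           (Ten L1 (MUnit L2) (MUnit L2), MUnit L2, varpi)
           (MUnit L1, MUnit L2, iota)"
  unfolding duoidal_def Let_def
  apply (intro conjI ballI)
  subgoal by (simp add: preduoidal_def b1.monoidal_EM b2.monoidal_EM)
  subgoal by (rule xi_hom_E)
  subgoal by (rule nat_E)
  subgoal by (rule mon1)
  subgoal by (rule comon)
  subgoal by (rule A1_E)
  subgoal by (rule A2_E)
  subgoal using U_E by blast
  subgoal using U_E by blast
  subgoal using U_E by blast
  subgoal using U_E by blast
  done

end


theorem mainTheorem2:
  fixes D :: "('o,'m) cat" and M1 M2 :: "('o,'m) mon" and T :: "('o,'m) monad"
    and T2c T2b :: "'o \<Rightarrow> 'o \<Rightarrow> 'm" and T0c T0b :: 'm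
    and R :: "'o \<Rightarrow> 'o \<Rightarrow> 'o \<Rightarrow> 'o \<Rightarrow> 'm" and nu varpi iota :: 'm
  assumes "preduoidal D M1 M2"
    and "sep_opmonoidal_monad D M1 M2 T T2c T0c T2b T0b"
    and "rmatrix D M1 M2 T T2c T0c T2b T0b R nu varpi iota"
  shows "duoidal (EM D T) (lift_mon D M1 T2c T0c) (lift_mon D M2 T2b T0b)
           (xi D M1 M2 T2c T0c T2b T0b R)
           (MUnit (lift_mon D M1 T2c T0c),
            Ten (lift_mon D M2 T2b T0b) (MUnit (lift_mon D M1 T2c T0c)) (MUnit (lift_mon D M1 T2c T0c)),
            nu)
           (Ten (lift_mon D M1 T2c T0c) (MUnit (lift_mon D M2 T2b T0b)) (MUnit (lift_mon D M2 T2b T0b)),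
            MUnit (lift_mon D M2 T2b T0b),
            varpi)
           (MUnit (lift_mon D M1 T2c T0c), MUnit (lift_mon D M2 T2b T0b), iota)"
proof -
  interpret c: ctx D M1 M2 T T2c T2b T0c T0b R nu varpi iota
    using assms unfolding ctx_def by blast
  show ?thesis by (rule c.duo)
qed

end
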